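(* For every $q\in\mathbb{Z}$, the group $BS(1,q)$ admits a one-counter left-order, and $BS(1,q)$ admits a regular left-order if and only if $q\geq -1$. Moreover, for $q\geq 2$, every regular left-order on $BS(1,q)$ is induced by the affine action of $BS(1,q)$ on $\mathbb{R}$ given by $a\colon x\mapsto qx$, $b\colon x\mapsto x+1$.
   Context: For $q\neq 0$, $BS(1,q)=\langle a,b\mid aba^{-1}=b^q\rangle$; by convention $BS(1,0)=\mathbb{Z}$. A left-order on a group $G$ is a total order invariant under left multiplication, with positive cone $P=\{g: 1\prec g\}$. For a class of languages $\mathcal{C}$, a left-order on a finitely generated group is a $\mathcal{C}$-left-order if there is a finite set $X$, a surjective monoid homomorphism $\pi\colon X^*\to G$ and a language $\mathcal{L}\subseteq X^*$ in $\mathcal{C}$ with $\pi(\mathcal{L})=P$. "Regular" means $\mathcal{C}$ is the class of languages accepted by finite state automata; "one-counter" means $\mathcal{C}$ is the class of languages accepted by nondeterministic pushdown automata with a single stack symbol. The map $a\mapsto(x\mapsto qx)$, $b\mapsto(x\mapsto x+1)$ defines a faithful action $\rho$ of $BS(1,q)$ ($q\ge 2$) on $\mathbb{R}$ by increasing affine maps; a left-order $\prec$ is said to be induced by this action if there is a point $x\in\mathbb{R}$ such that either for all $g$ with $\rho(g)(x)\neq x$ one has $1\prec g\iff \rho(g)(x)>x$, or for all such $g$ one has $1\prec g\iff\rho(g)(x)<x$. *)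

theory Defs
  imports Complex_Main "HOL-Algebra.Group"
begin

datatype gen = Ga | Gai | Gb | Gbi

fun gen_inv :: "gen \<Rightarrow> gen" where
  "gen_inv Ga = Gai" | "gen_inv Gai = Ga" | "gen_inv Gb = Gbi" | "gen_inv Gbi = Gb"

definition bpow :: "int \<Rightarrow> gen list" where
  "bpow q = (if 0 \<le> q then replicate (nat q) Gb else replicate (nat (- q)) Gbi)"

text \<open>The congruence on words defining the group with presentation
  < a, b | a b a^-1 = b^q >.  For q = 0 this gives Z, matching the convention BS(1,0) = Z.\<close>
inductive bs_eq :: "int \<Rightarrow> gen list \<Rightarrow> gen list \<Rightarrow> bool" for q where
  bs_refl: "bs_eq q u u"
| bs_sym: "bs_eq q u v \<Longrightarrow> bs_eq q v u"
| bs_trans: "bs_eq q u v \<Longrightarrow> bs_eq q v w \<Longrightarrow> bs_eq q u w"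
| bs_free: "bs_eq q (u @ [x, gen_inv x] @ v) (u @ v)"
| bs_rel: "bs_eq q (u @ [Ga, Gb, Gai] @ v) (u @ bpow q @ v)"

definition bs_class :: "int \<Rightarrow> gen list \<Rightarrow> gen list set" where
  "bs_class q u = {v. bs_eq q u v}"

definition BS :: "int \<Rightarrow> gen list set monoid" where
  "BS q = \<lparr> carrier = range (bs_class q),
            mult = (\<lambda>X Y. bs_class q ((SOME u. u \<in> X) @ (SOME v. v \<in> Y))),
            one = bs_class q [] \<rparr>"

definition left_order :: "('a, 'b) monoid_scheme \<Rightarrow> ('a \<Rightarrow> 'a \<Rightarrow> bool) \<Rightarrow> bool" where
  "left_order G R \<longleftrightarrow>
     (\<forall>x y. R x y \<longrightarrow> x \<in> carrier G \<and> y \<in> carrier G) \<and>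
     (\<forall>x\<in>carrier G. \<not> R x x) \<and>
     (\<forall>x\<in>carrier G. \<forall>y\<in>carrier G. \<forall>z\<in>carrier G. R x y \<longrightarrow> R y z \<longrightarrow> R x z) \<and>
     (\<forall>x\<in>carrier G. \<forall>y\<in>carrier G. x = y \<or> R x y \<or> R y x) \<and>
     (\<forall>g\<in>carrier G. \<forall>x\<in>carrier G. \<forall>y\<in>carrier G. R x y \<longrightarrow> R (g \<otimes>\<^bsub>G\<^esub> x) (g \<otimes>\<^bsub>G\<^esub> y))"

definition positive_cone :: "('a, 'b) monoid_scheme \<Rightarrow> ('a \<Rightarrow> 'a \<Rightarrow> bool) \<Rightarrow> 'a set" where
  "positive_cone G R = {g \<in> carrier G. R \<one>\<^bsub>G\<^esub> g}"

text \<open>A language class is a predicate on (alphabet, language); alphabets are finite sets of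
  natural numbers (w.l.o.g.), words are lists.\<close>
definition C_left_order ::
  "(nat set \<Rightarrow> nat list set \<Rightarrow> bool) \<Rightarrow> ('a, 'b) monoid_scheme \<Rightarrow> ('a \<Rightarrow> 'a \<Rightarrow> bool) \<Rightarrow> bool" where
  "C_left_order C G R \<longleftrightarrow> left_order G R \<and>
     (\<exists>(X :: nat set) (\<pi> :: nat list \<Rightarrow> 'a) L.
        finite X \<and>
        \<pi> [] = \<one>\<^bsub>G\<^esub> \<and>
        (\<forall>u\<in>lists X. \<forall>v\<in>lists X. \<pi> (u @ v) = \<pi> u \<otimes>\<^bsub>G\<^esub> \<pi> v) \<and>
        \<pi> ` lists X = carrier G \<and>
        L \<subseteq> lists X \<and> C X L \<and> \<pi> ` L = positive_cone G R)"

definition admits_C_left_order ::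
  "(nat set \<Rightarrow> nat list set \<Rightarrow> bool) \<Rightarrow> ('a, 'b) monoid_scheme \<Rightarrow> bool" where
  "admits_C_left_order C G \<longleftrightarrow> (\<exists>R. C_left_order C G R)"

inductive nfa_run :: "(nat \<times> nat \<times> nat) set \<Rightarrow> nat \<Rightarrow> nat list \<Rightarrow> nat \<Rightarrow> bool" for D where
  nfa_nil: "nfa_run D p [] p"
| nfa_step: "(p, x, p') \<in> D \<Longrightarrow> nfa_run D p' w r \<Longrightarrow> nfa_run D p (x # w) r"

definition regular_lang :: "nat set \<Rightarrow> nat list set \<Rightarrow> bool" where
  "regular_lang X L \<longleftrightarrow>
     (\<exists>(Q :: nat set) I F D. finite Q \<and> I \<subseteq> Q \<and> F \<subseteq> Q \<and> D \<subseteq> Q \<times> X \<times> Q \<and>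
        L = {w \<in> lists X. \<exists>p\<in>I. \<exists>r\<in>F. nfa_run D p w r})"

text \<open>Nondeterministic pushdown automaton whose stack alphabet consists of a single symbol
  (plus the bottom-of-stack marker).  The stack content is thus a natural number n (the
  number of copies of the symbol above the bottom marker).  A transition
  (p, s, z, p', k) reads s (an input letter, or nothing if s = None) in state p; if z then the
  top of the stack must be the bottom marker (n = 0), which is kept, and k symbols are pushed
  (new counter k); otherwise the top must be the stack symbol (n > 0), it is popped and k
  symbols are pushed (new counter n - 1 + k).\<close>
type_synonym oc_trans = "nat \<times> nat option \<times> bool \<times> nat \<times> nat"

inductive oc_run :: "oc_trans set \<Rightarrow> nat \<Rightarrow> nat \<Rightarrow> nat list \<Rightarrow> nat \<Rightarrow> nat \<Rightarrow> bool" for D where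
  oc_nil: "oc_run D p n [] p n"
| oc_read_zero: "(p, Some x, True, p', k) \<in> D \<Longrightarrow> oc_run D p' k w r m \<Longrightarrow> oc_run D p 0 (x # w) r m"
| oc_read_pos: "(p, Some x, False, p', k) \<in> D \<Longrightarrow> oc_run D p' (n + k) w r m \<Longrightarrow> oc_run D p (Suc n) (x # w) r m"
| oc_eps_zero: "(p, None, True, p', k) \<in> D \<Longrightarrow> oc_run D p' k w r m \<Longrightarrow> oc_run D p 0 w r m"
| oc_eps_pos: "(p, None, False, p', k) \<in> D \<Longrightarrow> oc_run D p' (n + k) w r m \<Longrightarrow> oc_run D p (Suc n) w r m"

definition one_counter_lang :: "nat set \<Rightarrow> nat list set \<Rightarrow> bool" where
  "one_counter_lang X L \<longleftrightarrow>
     (\<exists>(Q :: nat set) p0 F (D :: oc_trans set). finite Q \<and> p0 \<in> Q \<and> F \<subseteq> Q \<and> finite D \<and>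
        (\<forall>(p, s, z, p', k)\<in>D. p \<in> Q \<and> p' \<in> Q \<and> (\<forall>x. s = Some x \<longrightarrow> x \<in> X)) \<and>
        L = {w \<in> lists X. \<exists>r\<in>F. \<exists>m. oc_run D p0 0 w r m})"

fun gen_act :: "int \<Rightarrow> gen \<Rightarrow> real \<Rightarrow> real" where
  "gen_act q Ga x = of_int q * x"
| "gen_act q Gai x = x / of_int q"
| "gen_act q Gb x = x + 1"
| "gen_act q Gbi x = x - 1"

fun word_act :: "int \<Rightarrow> gen list \<Rightarrow> real \<Rightarrow> real" where
  "word_act q [] x = x"
| "word_act q (c # w) x = gen_act q c (word_act q w x)"

definition bs_act :: "int \<Rightarrow> gen list set \<Rightarrow> real \<Rightarrow> real" where
  "bs_act q g = word_act q (SOME w. w \<in> g)"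

definition induced_by_affine_action :: "int \<Rightarrow> (gen list set \<Rightarrow> gen list set \<Rightarrow> bool) \<Rightarrow> bool" where
  "induced_by_affine_action q R \<longleftrightarrow>
     (\<exists>x::real.
        (\<forall>g\<in>carrier (BS q). bs_act q g x \<noteq> x \<longrightarrow> (R \<one>\<^bsub>BS q\<^esub> g \<longleftrightarrow> bs_act q g x > x)) \<or>
        (\<forall>g\<in>carrier (BS q). bs_act q g x \<noteq> x \<longrightarrow> (R \<one>\<^bsub>BS q\<^esub> g \<longleftrightarrow> bs_act q g x < x)))"

end

theory Submission
  imports Defs
begin


lemma bs_eq_cong: "bs_eq q u v \<Longrightarrow> bs_eq q (x @ u @ y) (x @ v @ y)"
proof (induction rule: bs_eq.induct)
  case (bs_refl u) show ?case by (rule bs_eq.bs_refl)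
next
  case (bs_sym u v) from bs_sym.IH show ?case by (rule bs_eq.bs_sym)
next
  case (bs_trans u v w) thus ?case by (metis bs_eq.bs_trans)
next
  case (bs_free u c v)
  have "bs_eq q ((x@u) @ [c, gen_inv c] @ (v@y)) ((x@u) @ (v@y))" by (rule bs_eq.bs_free)
  thus ?case by simp
next
  case (bs_rel u v)
  have "bs_eq q ((x@u) @ [Ga, Gb, Gai] @ (v@y)) ((x@u) @ bpow q @ (v@y))" by (rule bs_eq.bs_rel)
  thus ?case by simp
qed

lemma bs_eq_cong2: "bs_eq q u u' \<Longrightarrow> bs_eq q v v' \<Longrightarrow> bs_eq q (u @ v) (u' @ v')"
proof -
  assume "bs_eq q u u'" "bs_eq q v v'"
  have "bs_eq q ([] @ u @ v) ([] @ u' @ v)" by (rule bs_eq_cong) fact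
  moreover have "bs_eq q (u' @ v @ []) (u' @ v' @ [])" by (rule bs_eq_cong) fact
  ultimately show ?thesis by (auto intro: bs_eq.bs_trans)
qed

lemma bs_class_eq_iff: "bs_class q u = bs_class q v \<longleftrightarrow> bs_eq q u v"
  unfolding bs_class_def
  by (auto intro: bs_eq.intros dest: bs_eq.bs_sym)

definition rep :: "gen list set \<Rightarrow> gen list" where "rep X = (SOME u. u \<in> X)"

lemma rep_class: "bs_eq q w (rep (bs_class q w))"
proof -
  have "w \<in> bs_class q w" by (simp add: bs_class_def bs_eq.bs_refl)
  hence "rep (bs_class q w) \<in> bs_class q w" unfolding rep_def by (rule someI)
  thus ?thesis by (simp add: bs_class_def)
qed

lemma class_rep: "bs_class q (rep (bs_class q w)) = bs_class q w"
  using rep_class bs_class_eq_iff bs_eq.bs_sym by metis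

lemma BS_carrier: "carrier (BS q) = range (bs_class q)" by (simp add: BS_def)
lemma BS_one: "\<one>\<^bsub>BS q\<^esub> = bs_class q []" by (simp add: BS_def)
lemma BS_mult: "bs_class q u \<otimes>\<^bsub>BS q\<^esub> bs_class q v = bs_class q (u @ v)"
proof -
  have "bs_eq q (rep (bs_class q u) @ rep (bs_class q v)) (u @ v)"
    by (rule bs_eq_cong2; rule bs_eq.bs_sym; rule rep_class)
  thus ?thesis by (simp add: BS_def rep_def[symmetric] bs_class_eq_iff)
qed

definition winv :: "gen list \<Rightarrow> gen list" where "winv w = rev (map gen_inv w)"

lemma gen_inv_inv [simp]: "gen_inv (gen_inv c) = c" by (cases c) auto

lemma winv_l: "bs_eq q (winv w @ w) []"
proof (induction w)
  case Nil show ?case by (simp add: winv_def bs_eq.bs_refl)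
next
  case (Cons c w)
  have "bs_eq q (winv w @ [gen_inv c, gen_inv (gen_inv c)] @ w) (winv w @ w)" by (rule bs_eq.bs_free)
  hence "bs_eq q (winv (c # w) @ c # w) (winv w @ w)" by (simp add: winv_def)
  thus ?case using Cons by (metis bs_eq.bs_trans)
qed

lemma group_BS: "group (BS q)"
proof (rule groupI)
  fix x y assume "x \<in> carrier (BS q)" "y \<in> carrier (BS q)"
  then obtain u v where "x = bs_class q u" "y = bs_class q v" by (auto simp: BS_carrier)
  thus "x \<otimes>\<^bsub>BS q\<^esub> y \<in> carrier (BS q)" by (simp add: BS_mult BS_carrier)
next
  show "\<one>\<^bsub>BS q\<^esub> \<in> carrier (BS q)" by (simp add: BS_one BS_carrier)
next
  fix x y z assume "x \<in> carrier (BS q)" "y \<in> carrier (BS q)" "z \<in> carrier (BS q)"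
  then obtain u v w where "x = bs_class q u" "y = bs_class q v" "z = bs_class q w" by (auto simp: BS_carrier)
  thus "x \<otimes>\<^bsub>BS q\<^esub> y \<otimes>\<^bsub>BS q\<^esub> z = x \<otimes>\<^bsub>BS q\<^esub> (y \<otimes>\<^bsub>BS q\<^esub> z)" by (simp add: BS_mult)
next
  fix x assume "x \<in> carrier (BS q)"
  then obtain u where "x = bs_class q u" by (auto simp: BS_carrier)
  thus "\<one>\<^bsub>BS q\<^esub> \<otimes>\<^bsub>BS q\<^esub> x = x" by (simp add: BS_mult BS_one)
next
  fix x assume "x \<in> carrier (BS q)"
  then obtain u where x: "x = bs_class q u" by (auto simp: BS_carrier)
  have "bs_class q (winv u) \<otimes>\<^bsub>BS q\<^esub> x = \<one>\<^bsub>BS q\<^esub>"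
    using winv_l[of q u] by (simp add: x BS_mult BS_one bs_class_eq_iff)
  thus "\<exists>y\<in>carrier (BS q). y \<otimes>\<^bsub>BS q\<^esub> x = \<one>\<^bsub>BS q\<^esub>" by (auto simp: BS_carrier)
qed

lemma class_in [simp]: "bs_class q w \<in> carrier (BS q)" by (simp add: BS_carrier)

lemma class_Cons: "bs_class q (c # w) = bs_class q [c] \<otimes>\<^bsub>BS q\<^esub> bs_class q w"
  by (simp add: BS_mult)


fun gexp :: "gen \<Rightarrow> int" where
  "gexp Ga = 1" | "gexp Gai = -1" | "gexp Gb = 0" | "gexp Gbi = 0"

definition expo :: "gen list \<Rightarrow> int" where "expo w = sum_list (map gexp w)"

lemma expo_simps [simp]: "expo [] = 0" "expo (c # w) = gexp c + expo w" "expo (u @ v) = expo u + expo v"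
  by (simp_all add: expo_def)

lemma expo_rep_Gb [simp]: "expo (replicate n Gb) = 0" "expo (replicate n Gbi) = 0"
  by (induction n) auto

lemma expo_bpow [simp]: "expo (bpow k) = 0" by (simp add: bpow_def)

lemma gen_inv_gexp [simp]: "gexp (gen_inv c) = - gexp c" by (cases c) auto

lemma bs_eq_expo: "bs_eq q u v \<Longrightarrow> expo u = expo v"
  by (induction rule: bs_eq.induct) auto

lemma word_act_append [simp]: "word_act q (u @ v) x = word_act q u (word_act q v x)"
  by (induction u) auto

lemma word_act_rep_Gb [simp]: "word_act q (replicate n Gb) x = x + of_nat n"
  "word_act q (replicate n Gbi) x = x - of_nat n"
  by (induction n) auto

lemma word_act_bpow [simp]: "word_act q (bpow k) x = x + of_int k"
  by (simp add: bpow_def)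

lemma word_act_affine: "q \<noteq> 0 \<Longrightarrow> word_act q w x = of_int q powi expo w * x + word_act q w 0"
proof (induction w arbitrary: x)
  case Nil thus ?case by simp
next
  case (Cons c w)
  have qn: "(of_int q :: real) \<noteq> 0" using Cons by simp
  show ?case
  proof (cases c)
    case Ga
    have "of_int q powi (1 + expo w) = of_int q * (of_int q powi expo w :: real)"
      using qn by (simp add: power_int_add)
    thus ?thesis using Cons.IH[OF Cons.prems, of x] Ga by (simp add: algebra_simps)
  next
    case Gai
    have h: "(of_int q powi (expo w - 1)) * of_int q = (of_int q powi expo w :: real)"
      using qn by (rule power_int_minus_mult[OF disjI1])
    have "of_int q powi (-1 + expo w) = (of_int q powi expo w :: real) / of_int q"
      using qn h[symmetric] by (simp add: add.commute[of "-1"])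
    thus ?thesis using Cons.IH[OF Cons.prems, of x] Gai qn by (simp add: add_divide_distrib)
  next
    case Gb thus ?thesis using Cons.IH[OF Cons.prems, of x] by simp
  next
    case Gbi thus ?thesis using Cons.IH[OF Cons.prems, of x] by simp
  qed
qed

lemma gen_act_inv: "q \<noteq> 0 \<Longrightarrow> gen_act q (gen_inv c) (gen_act q c x) = x"
  by (cases c) auto

lemma gen_act_inv2: "q \<noteq> 0 \<Longrightarrow> gen_act q c (gen_act q (gen_inv c) x) = x"
  by (cases c) auto

lemma bs_eq_word_act: "bs_eq q u v \<Longrightarrow> q \<noteq> 0 \<Longrightarrow> word_act q u = word_act q v"
proof (induction rule: bs_eq.induct)
  case (bs_free u c v)
  thus ?case by (auto simp: gen_act_inv2 fun_eq_iff)
next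
  case (bs_rel u v)
  thus ?case by (auto simp: fun_eq_iff distrib_left)
qed auto

definition gn :: "gen list set \<Rightarrow> int" where "gn g = expo (rep g)"
definition gr :: "int \<Rightarrow> gen list set \<Rightarrow> real" where "gr q g = word_act q (rep g) 0"

lemma gn_class [simp]: "gn (bs_class q w) = expo w"
  using bs_eq_expo[OF rep_class[of q w]] by (simp add: gn_def)

lemma gr_class [simp]: "q \<noteq> 0 \<Longrightarrow> gr q (bs_class q w) = word_act q w 0"
  using bs_eq_word_act[OF rep_class[of q w]] by (simp add: gr_def)

lemma bs_act_eq: "q \<noteq> 0 \<Longrightarrow> bs_act q g x = of_int q powi gn g * x + gr q g"
  unfolding bs_act_def gn_def gr_def rep_def[symmetric] by (rule word_act_affine)

lemma carrier_E: "g \<in> carrier (BS q) \<Longrightarrow> (\<And>w. g = bs_class q w \<Longrightarrow> P) \<Longrightarrow> P"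
  by (auto simp: BS_carrier)

lemma gn_mult: "g \<in> carrier (BS q) \<Longrightarrow> h \<in> carrier (BS q) \<Longrightarrow> gn (g \<otimes>\<^bsub>BS q\<^esub> h) = gn g + gn h"
  by (auto simp: BS_carrier BS_mult)

lemma gr_mult: "q \<noteq> 0 \<Longrightarrow> g \<in> carrier (BS q) \<Longrightarrow> h \<in> carrier (BS q) \<Longrightarrow>
   gr q (g \<otimes>\<^bsub>BS q\<^esub> h) = gr q g + of_int q powi gn g * gr q h"
proof -
  assume q: "q \<noteq> 0" and g: "g \<in> carrier (BS q)" and h: "h \<in> carrier (BS q)"
  obtain u v where u: "g = bs_class q u" and v: "h = bs_class q v" using g h by (auto simp: BS_carrier)
  have "word_act q u (word_act q v 0) = of_int q powi expo u * word_act q v 0 + word_act q u 0"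
    by (rule word_act_affine[OF q])
  thus ?thesis using q by (simp add: u v BS_mult)
qed

lemma gn_one [simp]: "gn \<one>\<^bsub>BS q\<^esub> = 0" by (simp add: BS_one)
lemma gr_one [simp]: "q \<noteq> 0 \<Longrightarrow> gr q \<one>\<^bsub>BS q\<^esub> = 0" by (simp add: BS_one)

lemma gn_inv: "g \<in> carrier (BS q) \<Longrightarrow> gn (inv\<^bsub>BS q\<^esub> g) = - gn g"
proof -
  interpret G: group "BS q" by (rule group_BS)
  assume g: "g \<in> carrier (BS q)"
  have "gn (inv\<^bsub>BS q\<^esub> g \<otimes>\<^bsub>BS q\<^esub> g) = 0" using g by simp
  thus ?thesis using g gn_mult[of "inv\<^bsub>BS q\<^esub> g" q g] by simp
qed

lemma gr_inv: "q \<noteq> 0 \<Longrightarrow> g \<in> carrier (BS q) \<Longrightarrow> gr q (inv\<^bsub>BS q\<^esub> g) = - (of_int q powi (- gn g)) * gr q g"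
proof -
  interpret G: group "BS q" by (rule group_BS)
  assume q: "q \<noteq> 0" and g: "g \<in> carrier (BS q)"
  have "gr q (inv\<^bsub>BS q\<^esub> g \<otimes>\<^bsub>BS q\<^esub> g) = 0" using g q by simp
  thus ?thesis using g q gr_mult[of q "inv\<^bsub>BS q\<^esub> g" g] gn_inv[OF g] by simp
qed


section \<open>Normal forms and faithfulness\<close>

abbreviation "aA q \<equiv> bs_class q [Ga]"
abbreviation "bB q \<equiv> bs_class q [Gb]"

lemma cls_Gai: "bs_class q [Gai] = inv\<^bsub>BS q\<^esub> (aA q)"
proof -
  interpret G: group "BS q" by (rule group_BS)
  have "bs_eq q ([] @ [Gai, gen_inv Gai] @ []) ([] @ [])" by (rule bs_eq.bs_free)
  hence "bs_class q [Gai] \<otimes>\<^bsub>BS q\<^esub> aA q = \<one>\<^bsub>BS q\<^esub>" by (simp add: BS_mult BS_one bs_class_eq_iff)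
  thus ?thesis by (metis G.inv_equality class_in)
qed

lemma cls_Gbi: "bs_class q [Gbi] = inv\<^bsub>BS q\<^esub> (bB q)"
proof -
  interpret G: group "BS q" by (rule group_BS)
  have "bs_eq q ([] @ [Gbi, gen_inv Gbi] @ []) ([] @ [])" by (rule bs_eq.bs_free)
  hence "bs_class q [Gbi] \<otimes>\<^bsub>BS q\<^esub> bB q = \<one>\<^bsub>BS q\<^esub>" by (simp add: BS_mult BS_one bs_class_eq_iff)
  thus ?thesis by (metis G.inv_equality class_in)
qed

lemma cls_rep: "bs_class q (replicate n c) = bs_class q [c] [^]\<^bsub>BS q\<^esub> n"
proof (induction n)
  case 0 show ?case by (simp add: BS_one)
next
  case (Suc n)
  interpret G: group "BS q" by (rule group_BS)
  have "bs_class q (replicate (Suc n) c) = bs_class q [c] \<otimes>\<^bsub>BS q\<^esub> bs_class q (replicate n c)"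
    by (simp add: BS_mult)
  also have "\<dots> = bs_class q [c] [^]\<^bsub>BS q\<^esub> Suc n" using Suc by (simp add: G.nat_pow_Suc2 del: nat_pow_Suc G.nat_pow_Suc)
  finally show ?case .
qed

lemma cls_bpow: "bs_class q (bpow k) = bB q [^]\<^bsub>BS q\<^esub> k"
proof -
  interpret G: group "BS q" by (rule group_BS)
  show ?thesis
  proof (cases "0 \<le> k")
    case True
    thus ?thesis unfolding bpow_def int_pow_def2 by (simp add: cls_rep)
  next
    case False
    have "bs_class q (bpow k) = inv\<^bsub>BS q\<^esub> (bB q) [^]\<^bsub>BS q\<^esub> nat (- k)"
      using False unfolding bpow_def by (simp only: if_False cls_rep cls_Gbi)
    also have "\<dots> = inv\<^bsub>BS q\<^esub> (bB q [^]\<^bsub>BS q\<^esub> nat (- k))" by (rule G.nat_pow_inv) simp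
    finally show ?thesis using False unfolding int_pow_def2 by simp
  qed
qed

lemma rel_AB: "aA q \<otimes>\<^bsub>BS q\<^esub> bB q \<otimes>\<^bsub>BS q\<^esub> inv\<^bsub>BS q\<^esub> (aA q) = bB q [^]\<^bsub>BS q\<^esub> q"
proof -
  have "bs_eq q ([] @ [Ga, Gb, Gai] @ []) ([] @ bpow q @ [])" by (rule bs_eq.bs_rel)
  hence "bs_class q [Ga, Gb, Gai] = bs_class q (bpow q)" by (simp add: bs_class_eq_iff)
  moreover have "aA q \<otimes>\<^bsub>BS q\<^esub> bB q \<otimes>\<^bsub>BS q\<^esub> bs_class q [Gai] = bs_class q [Ga, Gb, Gai]"
    by (simp add: BS_mult)
  ultimately show ?thesis by (simp add: cls_Gai cls_bpow)
qed

lemma grp_cancel1: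
  assumes "group G" "x \<in> carrier G" "t \<in> carrier G"
  shows "inv\<^bsub>G\<^esub> x \<otimes>\<^bsub>G\<^esub> (x \<otimes>\<^bsub>G\<^esub> t) = t" "x \<otimes>\<^bsub>G\<^esub> (inv\<^bsub>G\<^esub> x \<otimes>\<^bsub>G\<^esub> t) = t"
proof -
  interpret G: group G by fact
  show "inv\<^bsub>G\<^esub> x \<otimes>\<^bsub>G\<^esub> (x \<otimes>\<^bsub>G\<^esub> t) = t" using assms by (simp add: G.m_assoc[symmetric])
  show "x \<otimes>\<^bsub>G\<^esub> (inv\<^bsub>G\<^esub> x \<otimes>\<^bsub>G\<^esub> t) = t" using assms by (simp add: G.m_assoc[symmetric])
qed

lemma conj_mult:
  assumes "group G" "x \<in> carrier G" "y \<in> carrier G" "z \<in> carrier G"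
  shows "x \<otimes>\<^bsub>G\<^esub> (y \<otimes>\<^bsub>G\<^esub> z) \<otimes>\<^bsub>G\<^esub> inv\<^bsub>G\<^esub> x =
    (x \<otimes>\<^bsub>G\<^esub> y \<otimes>\<^bsub>G\<^esub> inv\<^bsub>G\<^esub> x) \<otimes>\<^bsub>G\<^esub> (x \<otimes>\<^bsub>G\<^esub> z \<otimes>\<^bsub>G\<^esub> inv\<^bsub>G\<^esub> x)"
proof -
  interpret G: group G by fact
  show ?thesis using assms(2-4) by (simp add: G.m_assoc grp_cancel1[OF assms(1)])
qed

lemma conj_inv:
  assumes "group G" "x \<in> carrier G" "y \<in> carrier G"
  shows "x \<otimes>\<^bsub>G\<^esub> inv\<^bsub>G\<^esub> y \<otimes>\<^bsub>G\<^esub> inv\<^bsub>G\<^esub> x = inv\<^bsub>G\<^esub> (x \<otimes>\<^bsub>G\<^esub> y \<otimes>\<^bsub>G\<^esub> inv\<^bsub>G\<^esub> x)"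
proof -
  interpret G: group G by fact
  show ?thesis using assms(2-3) by (simp add: G.m_assoc G.inv_mult_group)
qed

lemma conj_A_nat: "aA q \<otimes>\<^bsub>BS q\<^esub> bB q [^]\<^bsub>BS q\<^esub> (int n) \<otimes>\<^bsub>BS q\<^esub> inv\<^bsub>BS q\<^esub> (aA q) = bB q [^]\<^bsub>BS q\<^esub> (q * int n)"
proof (induction n)
  case 0
  interpret G: group "BS q" by (rule group_BS)
  show ?case by simp
next
  case (Suc n)
  interpret G: group "BS q" by (rule group_BS)
  have e: "bB q [^]\<^bsub>BS q\<^esub> (int (Suc n)) = bB q [^]\<^bsub>BS q\<^esub> (int n) \<otimes>\<^bsub>BS q\<^esub> bB q"
    using G.int_pow_mult[where x="bB q" and i="int n" and j=1] by (simp add: add.commute)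
  have "aA q \<otimes>\<^bsub>BS q\<^esub> bB q [^]\<^bsub>BS q\<^esub> (int (Suc n)) \<otimes>\<^bsub>BS q\<^esub> inv\<^bsub>BS q\<^esub> (aA q)
     = bB q [^]\<^bsub>BS q\<^esub> (q * int n) \<otimes>\<^bsub>BS q\<^esub> bB q [^]\<^bsub>BS q\<^esub> q"
    unfolding e using conj_mult[OF group_BS[of q], of "aA q" "bB q [^]\<^bsub>BS q\<^esub> (int n)" "bB q"]
    by (simp add: Suc rel_AB)
  also have "\<dots> = bB q [^]\<^bsub>BS q\<^esub> (q * int (Suc n))"
    by (simp add: G.int_pow_mult[symmetric] algebra_simps)
  finally show ?case .
qed

lemma conj_A: "aA q \<otimes>\<^bsub>BS q\<^esub> bB q [^]\<^bsub>BS q\<^esub> k \<otimes>\<^bsub>BS q\<^esub> inv\<^bsub>BS q\<^esub> (aA q) = bB q [^]\<^bsub>BS q\<^esub> (q * k)"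
proof (cases "k \<ge> 0")
  case True
  then obtain n where "k = int n" by (metis nonneg_eq_int)
  thus ?thesis by (simp add: conj_A_nat)
next
  case False
  interpret G: group "BS q" by (rule group_BS)
  from False obtain n where k: "k = - int n" by (metis le_cases neg_0_le_iff_le nonneg_eq_int verit_minus_simplify(4))
  have "aA q \<otimes>\<^bsub>BS q\<^esub> bB q [^]\<^bsub>BS q\<^esub> k \<otimes>\<^bsub>BS q\<^esub> inv\<^bsub>BS q\<^esub> (aA q)
      = inv\<^bsub>BS q\<^esub> (aA q \<otimes>\<^bsub>BS q\<^esub> bB q [^]\<^bsub>BS q\<^esub> (int n) \<otimes>\<^bsub>BS q\<^esub> inv\<^bsub>BS q\<^esub> (aA q))"
    unfolding k G.int_pow_neg[OF class_in] by (rule conj_inv[OF group_BS[of q]]) simp_all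
  also have "\<dots> = bB q [^]\<^bsub>BS q\<^esub> (q * k)"
    by (simp add: conj_A_nat k G.int_pow_neg[symmetric])
  finally show ?thesis .
qed

lemma conj_An: "aA q [^]\<^bsub>BS q\<^esub> (m::nat) \<otimes>\<^bsub>BS q\<^esub> bB q [^]\<^bsub>BS q\<^esub> k \<otimes>\<^bsub>BS q\<^esub> inv\<^bsub>BS q\<^esub> (aA q [^]\<^bsub>BS q\<^esub> m) = bB q [^]\<^bsub>BS q\<^esub> (q ^ m * k)"
proof (induction m arbitrary: k)
  case 0
  interpret G: group "BS q" by (rule group_BS)
  show ?case by simp
next
  case (Suc m)
  interpret G: group "BS q" by (rule group_BS)
  have "aA q [^]\<^bsub>BS q\<^esub> (Suc m) \<otimes>\<^bsub>BS q\<^esub> bB q [^]\<^bsub>BS q\<^esub> k \<otimes>\<^bsub>BS q\<^esub> inv\<^bsub>BS q\<^esub> (aA q [^]\<^bsub>BS q\<^esub> Suc m)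
     = aA q \<otimes>\<^bsub>BS q\<^esub> (aA q [^]\<^bsub>BS q\<^esub> m \<otimes>\<^bsub>BS q\<^esub> bB q [^]\<^bsub>BS q\<^esub> k \<otimes>\<^bsub>BS q\<^esub> inv\<^bsub>BS q\<^esub> (aA q [^]\<^bsub>BS q\<^esub> m)) \<otimes>\<^bsub>BS q\<^esub> inv\<^bsub>BS q\<^esub> (aA q)"
    by (simp add: G.nat_pow_Suc2 G.inv_mult_group G.m_assoc del: nat_pow_Suc G.nat_pow_Suc)
  also have "\<dots> = bB q [^]\<^bsub>BS q\<^esub> (q ^ Suc m * k)" by (simp add: Suc conj_A algebra_simps)
  finally show ?case .
qed

lemma B_swap: "bB q [^]\<^bsub>BS q\<^esub> (j::int) \<otimes>\<^bsub>BS q\<^esub> inv\<^bsub>BS q\<^esub> (aA q [^]\<^bsub>BS q\<^esub> (m::nat))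
   = inv\<^bsub>BS q\<^esub> (aA q [^]\<^bsub>BS q\<^esub> m) \<otimes>\<^bsub>BS q\<^esub> bB q [^]\<^bsub>BS q\<^esub> (q ^ m * j)"
proof -
  interpret G: group "BS q" by (rule group_BS)
  show ?thesis by (simp add: conj_An[symmetric] G.m_assoc[symmetric])
qed

definition nf :: "int \<Rightarrow> nat \<Rightarrow> int \<Rightarrow> nat \<Rightarrow> gen list set" where
  "nf q m k m' = inv\<^bsub>BS q\<^esub> (aA q [^]\<^bsub>BS q\<^esub> m) \<otimes>\<^bsub>BS q\<^esub> (bB q [^]\<^bsub>BS q\<^esub> k \<otimes>\<^bsub>BS q\<^esub> aA q [^]\<^bsub>BS q\<^esub> m')"

lemma nf_exists: "\<exists>m k m'. bs_class q w = nf q m k m'"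
proof (induction w)
  case Nil
  interpret G: group "BS q" by (rule group_BS)
  have "nf q 0 0 0 = \<one>\<^bsub>BS q\<^esub>" by (simp add: nf_def)
  hence "bs_class q [] = nf q 0 0 0" by (simp add: BS_one)
  thus ?case by blast
next
  case (Cons c w)
  interpret G: group "BS q" by (rule group_BS)
  from Cons obtain m k m' where w: "bs_class q w = nf q m k m'" by blast
  have cw: "bs_class q (c # w) = bs_class q [c] \<otimes>\<^bsub>BS q\<^esub> nf q m k m'" by (simp add: BS_mult w[symmetric])
  have Bj: "bB q [^]\<^bsub>BS q\<^esub> j \<otimes>\<^bsub>BS q\<^esub> nf q m k m' = nf q m (q ^ m * j + k) m'" for j
    unfolding nf_def
    by (simp add: G.m_assoc[symmetric] B_swap) (simp add: G.m_assoc G.int_pow_mult)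
  show ?case
  proof (cases c)
    case Ga
    show ?thesis
    proof (cases m)
      case 0
      have "aA q \<otimes>\<^bsub>BS q\<^esub> bB q [^]\<^bsub>BS q\<^esub> k = bB q [^]\<^bsub>BS q\<^esub> (q * k) \<otimes>\<^bsub>BS q\<^esub> aA q"
        by (simp add: conj_A[symmetric] G.m_assoc)
      hence "bs_class q (c # w) = nf q 0 (q * k) (Suc m')"
        unfolding cw unfolding Ga nf_def 0 by (simp add: G.m_assoc[symmetric] G.nat_pow_Suc2 del: nat_pow_Suc G.nat_pow_Suc)
      thus ?thesis by blast
    next
      case (Suc m0)
      have "bs_class q (c # w) = nf q m0 k m'"
        unfolding cw unfolding Ga nf_def Suc by (simp add: G.m_assoc[symmetric] G.inv_mult_group)
      thus ?thesis by blast
    qed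
  next
    case Gai
    have "bs_class q (c # w) = nf q (Suc m) k m'"
      unfolding cw unfolding Gai nf_def cls_Gai by (simp add: G.m_assoc[symmetric] G.inv_mult_group)
    thus ?thesis by blast
  next
    case Gb
    have "bs_class q (c # w) = nf q m (q ^ m * 1 + k) m'"
      unfolding cw unfolding Gb Bj[symmetric] by simp
    thus ?thesis by blast
  next
    case Gbi
    have "bs_class q (c # w) = nf q m (q ^ m * (-1) + k) m'"
      unfolding cw unfolding Gbi Bj[symmetric] cls_Gbi by (simp add: G.int_pow_neg)
    thus ?thesis by blast
  qed
qed

definition nfw :: "nat \<Rightarrow> int \<Rightarrow> nat \<Rightarrow> gen list" where
  "nfw m k m' = replicate m Gai @ bpow k @ replicate m' Ga"

lemma nf_nfw: "nf q m k m' = bs_class q (nfw m k m')"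
proof -
  interpret G: group "BS q" by (rule group_BS)
  show ?thesis
    by (simp add: nf_def nfw_def BS_mult[symmetric] cls_rep cls_Gai cls_bpow G.nat_pow_inv)
qed

lemma expo_rep [simp]: "expo (replicate n c) = int n * gexp c"
  by (induction n) (auto simp: algebra_simps)

lemma word_act_rep_Ga [simp]: "word_act q (replicate n Ga) 0 = 0"
  by (induction n) auto

lemma word_act_rep_Gai: "word_act q (replicate n Gai) x = x / of_int q ^ n"
  by (induction n) auto

lemma expo_nfw [simp]: "expo (nfw m k m') = int m' - int m"
  by (simp add: nfw_def)

lemma word_act_nfw: "q \<noteq> 0 \<Longrightarrow> word_act q (nfw m k m') 0 = of_int k * of_int q powi (- int m)"
  by (simp add: nfw_def word_act_rep_Gai power_int_minus divide_inverse)

lemma gn_nf [simp]: "gn (nf q m k m') = int m' - int m"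
  by (simp add: nf_nfw)

lemma gr_nf [simp]: "q \<noteq> 0 \<Longrightarrow> gr q (nf q m k m') = of_int k * of_int q powi (- int m)"
  by (simp add: nf_nfw word_act_nfw)

lemma carrier_nf: "g \<in> carrier (BS q) \<Longrightarrow> \<exists>m k m'. g = nf q m k m'"
  using nf_exists by (auto simp: BS_carrier)

lemma kernel_trivial:
  assumes q: "q \<noteq> 0" and g: "g \<in> carrier (BS q)" and "gn g = 0" "gr q g = 0"
  shows "g = \<one>\<^bsub>BS q\<^esub>"
proof -
  interpret G: group "BS q" by (rule group_BS)
  obtain m k m' where gnf: "g = nf q m k m'" using carrier_nf[OF g] by blast
  have "m' = m" using assms(3) gnf by simp
  moreover have "k = 0" using assms(4) gnf q by simp
  ultimately show ?thesis unfolding gnf nf_def by simp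
qed

lemma faithful:
  assumes q: "q \<noteq> 0" and g: "g \<in> carrier (BS q)" and h: "h \<in> carrier (BS q)"
    and "gn g = gn h" "gr q g = gr q h"
  shows "g = h"
proof -
  interpret G: group "BS q" by (rule group_BS)
  let ?x = "inv\<^bsub>BS q\<^esub> g \<otimes>\<^bsub>BS q\<^esub> h"
  have "gn ?x = 0" using assms by (simp add: gn_mult gn_inv)
  moreover have "gr q ?x = 0" using assms by (simp add: gr_mult gr_inv gn_inv)
  ultimately have "?x = \<one>\<^bsub>BS q\<^esub>" using kernel_trivial[OF q] g h by simp
  thus ?thesis using g h by (metis G.inv_equality G.inv_inv G.inv_closed)
qed

lemma B_trivial0: "bB 0 = \<one>\<^bsub>BS 0\<^esub>"
proof -
  interpret G: group "BS 0" by (rule group_BS)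
  have "aA 0 \<otimes>\<^bsub>BS 0\<^esub> bB 0 \<otimes>\<^bsub>BS 0\<^esub> inv\<^bsub>BS 0\<^esub> (aA 0) = \<one>\<^bsub>BS 0\<^esub>" using rel_AB[of 0] by simp
  hence "aA 0 \<otimes>\<^bsub>BS 0\<^esub> bB 0 = aA 0"
    by (metis G.inv_closed G.inv_inv G.inv_equality G.m_closed class_in)
  thus ?thesis by simp
qed

lemma faithful0:
  assumes g: "g \<in> carrier (BS 0)" and h: "h \<in> carrier (BS 0)" and "gn g = gn h"
  shows "g = h"
proof -
  interpret G: group "BS 0" by (rule group_BS)
  have nf0: "nf 0 m k m' = inv\<^bsub>BS 0\<^esub> (aA 0 [^]\<^bsub>BS 0\<^esub> m) \<otimes>\<^bsub>BS 0\<^esub> aA 0 [^]\<^bsub>BS 0\<^esub> m'" for m k m'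
    by (simp add: nf_def B_trivial0)
  have ker: "x = \<one>\<^bsub>BS 0\<^esub>" if x1: "x \<in> carrier (BS 0)" and x2: "gn x = 0" for x
  proof -
    obtain m k m' where gnf: "x = nf 0 m k m'" using carrier_nf[OF x1] by blast
    have "m' = m" using x2 gnf by simp
    thus ?thesis unfolding gnf nf0 by simp
  qed
  have "inv\<^bsub>BS 0\<^esub> g \<otimes>\<^bsub>BS 0\<^esub> h = \<one>\<^bsub>BS 0\<^esub>" using assms by (intro ker) (simp_all add: gn_mult gn_inv)
  thus ?thesis using g h by (metis G.inv_equality G.inv_inv G.inv_closed)
qed

lemma gr_form:
  assumes q: "q \<noteq> 0" and g: "g \<in> carrier (BS q)"
  shows "\<exists>m::nat. \<exists>k::int. gr q g = of_int k * of_int q powi (- int m)"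
proof -
  obtain m k m' where gnf: "g = nf q m k m'" using carrier_nf[OF g] by blast
  show ?thesis by (rule exI[of _ m], rule exI[of _ k]) (simp add: gnf q)
qed


definition cone_rel :: "('a, 'b) monoid_scheme \<Rightarrow> 'a set \<Rightarrow> 'a \<Rightarrow> 'a \<Rightarrow> bool" where
  "cone_rel G P x y \<longleftrightarrow> x \<in> carrier G \<and> y \<in> carrier G \<and> inv\<^bsub>G\<^esub> x \<otimes>\<^bsub>G\<^esub> y \<in> P"

lemma cone_left_order:
  assumes G: "group G" and sub: "P \<subseteq> carrier G" and one: "\<one>\<^bsub>G\<^esub> \<notin> P"
    and mult: "\<And>g h. g \<in> P \<Longrightarrow> h \<in> P \<Longrightarrow> g \<otimes>\<^bsub>G\<^esub> h \<in> P"
    and tot: "\<And>g. g \<in> carrier G \<Longrightarrow> g \<noteq> \<one>\<^bsub>G\<^esub> \<Longrightarrow> g \<in> P \<or> inv\<^bsub>G\<^esub> g \<in> P"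
  shows "left_order G (cone_rel G P)" "positive_cone G (cone_rel G P) = P"
proof -
  interpret G: group G by fact
  have c1: "\<forall>x y. cone_rel G P x y \<longrightarrow> x \<in> carrier G \<and> y \<in> carrier G" by (simp add: cone_rel_def)
  have c2: "\<forall>x\<in>carrier G. \<not> cone_rel G P x x" using one by (simp add: cone_rel_def)
  have c3: "\<forall>x\<in>carrier G. \<forall>y\<in>carrier G. \<forall>z\<in>carrier G. cone_rel G P x y \<longrightarrow> cone_rel G P y z \<longrightarrow> cone_rel G P x z"
  proof (intro ballI impI)
    fix x y z assume xyz: "x \<in> carrier G" "y \<in> carrier G" "z \<in> carrier G"
      and "cone_rel G P x y" "cone_rel G P y z"
    hence "(inv\<^bsub>G\<^esub> x \<otimes>\<^bsub>G\<^esub> y) \<otimes>\<^bsub>G\<^esub> (inv\<^bsub>G\<^esub> y \<otimes>\<^bsub>G\<^esub> z) \<in> P" by (simp add: cone_rel_def mult)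
    moreover have "(inv\<^bsub>G\<^esub> x \<otimes>\<^bsub>G\<^esub> y) \<otimes>\<^bsub>G\<^esub> (inv\<^bsub>G\<^esub> y \<otimes>\<^bsub>G\<^esub> z) = inv\<^bsub>G\<^esub> x \<otimes>\<^bsub>G\<^esub> z"
      using xyz by (simp add: G.m_assoc grp_cancel1[OF G])
    ultimately show "cone_rel G P x z" using xyz by (simp add: cone_rel_def)
  qed
  have c4: "\<forall>x\<in>carrier G. \<forall>y\<in>carrier G. x = y \<or> cone_rel G P x y \<or> cone_rel G P y x"
  proof (intro ballI)
    fix x y assume xy: "x \<in> carrier G" "y \<in> carrier G"
    show "x = y \<or> cone_rel G P x y \<or> cone_rel G P y x"
    proof (cases "x = y")
      case False
      hence "inv\<^bsub>G\<^esub> x \<otimes>\<^bsub>G\<^esub> y \<noteq> \<one>\<^bsub>G\<^esub>" using xy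
        by (metis G.inv_closed G.inv_equality G.inv_inv)
      hence "inv\<^bsub>G\<^esub> x \<otimes>\<^bsub>G\<^esub> y \<in> P \<or> inv\<^bsub>G\<^esub> (inv\<^bsub>G\<^esub> x \<otimes>\<^bsub>G\<^esub> y) \<in> P" using tot xy by simp
      moreover have "inv\<^bsub>G\<^esub> (inv\<^bsub>G\<^esub> x \<otimes>\<^bsub>G\<^esub> y) = inv\<^bsub>G\<^esub> y \<otimes>\<^bsub>G\<^esub> x" using xy by (simp add: G.inv_mult_group)
      ultimately show ?thesis using xy by (auto simp: cone_rel_def)
    qed simp
  qed
  have c5: "\<forall>g\<in>carrier G. \<forall>x\<in>carrier G. \<forall>y\<in>carrier G. cone_rel G P x y \<longrightarrow> cone_rel G P (g \<otimes>\<^bsub>G\<^esub> x) (g \<otimes>\<^bsub>G\<^esub> y)"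
  proof (intro ballI impI)
    fix g x y assume gxy: "g \<in> carrier G" "x \<in> carrier G" "y \<in> carrier G" and "cone_rel G P x y"
    moreover have "inv\<^bsub>G\<^esub> (g \<otimes>\<^bsub>G\<^esub> x) \<otimes>\<^bsub>G\<^esub> (g \<otimes>\<^bsub>G\<^esub> y) = inv\<^bsub>G\<^esub> x \<otimes>\<^bsub>G\<^esub> y"
      using gxy by (simp add: G.inv_mult_group G.m_assoc grp_cancel1[OF G])
    ultimately show "cone_rel G P (g \<otimes>\<^bsub>G\<^esub> x) (g \<otimes>\<^bsub>G\<^esub> y)" by (simp add: cone_rel_def)
  qed
  show "left_order G (cone_rel G P)" unfolding left_order_def using c1 c2 c3 c4 c5 by blast
  show "positive_cone G (cone_rel G P) = P"
    using sub by (auto simp: positive_cone_def cone_rel_def)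
qed

locale lord = group G for G (structure) +
  fixes R
  assumes lo: "left_order G R"
begin

lemma lo1: "\<forall>x y. R x y \<longrightarrow> x \<in> carrier G \<and> y \<in> carrier G"
  using lo unfolding left_order_def by (elim conjE) assumption
lemma lo2: "\<forall>x\<in>carrier G. \<not> R x x"
  using lo unfolding left_order_def by (elim conjE) assumption
lemma lo3: "\<forall>x\<in>carrier G. \<forall>y\<in>carrier G. \<forall>z\<in>carrier G. R x y \<longrightarrow> R y z \<longrightarrow> R x z"
  using lo unfolding left_order_def by (elim conjE) assumption
lemma lo4: "\<forall>x\<in>carrier G. \<forall>y\<in>carrier G. x = y \<or> R x y \<or> R y x"
  using lo unfolding left_order_def by (elim conjE) assumption
lemma lo5: "\<forall>g\<in>carrier G. \<forall>x\<in>carrier G. \<forall>y\<in>carrier G. R x y \<longrightarrow> R (g \<otimes> x) (g \<otimes> y)"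
  using lo unfolding left_order_def by (elim conjE) assumption

lemma R_carrier: "R x y \<Longrightarrow> x \<in> carrier G \<and> y \<in> carrier G"
  using lo1 by blast

lemma R_irrefl: "\<not> R x x"
  using lo2 R_carrier by blast

lemma R_trans: "R x y \<Longrightarrow> R y z \<Longrightarrow> R x z"
proof -
  assume a: "R x y" "R y z"
  hence "x \<in> carrier G" "y \<in> carrier G" "z \<in> carrier G" using R_carrier by auto
  thus ?thesis using lo3 a by blast
qed

lemma R_total: "x \<in> carrier G \<Longrightarrow> y \<in> carrier G \<Longrightarrow> x = y \<or> R x y \<or> R y x"
  using lo4 by blast

lemma R_left: "g \<in> carrier G \<Longrightarrow> R x y \<Longrightarrow> R (g \<otimes> x) (g \<otimes> y)"
proof -
  assume a: "g \<in> carrier G" "R x y"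
  hence "x \<in> carrier G" "y \<in> carrier G" using R_carrier by auto
  thus ?thesis using lo5 a by blast
qed

lemma R_left_iff: "g \<in> carrier G \<Longrightarrow> x \<in> carrier G \<Longrightarrow> y \<in> carrier G \<Longrightarrow> R (g \<otimes> x) (g \<otimes> y) \<longleftrightarrow> R x y"
proof
  assume g: "g \<in> carrier G" and xy: "x \<in> carrier G" "y \<in> carrier G" and r: "R (g \<otimes> x) (g \<otimes> y)"
  have "R (inv g \<otimes> (g \<otimes> x)) (inv g \<otimes> (g \<otimes> y))" using R_left[OF _ r, of "inv g"] g by simp
  thus "R x y" using g xy by (simp add: m_assoc[symmetric] del: r_inv l_inv)
qed (rule R_left)

lemma R_asym: "R x y \<Longrightarrow> \<not> R y x"
  using R_trans R_irrefl by blast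

lemma pos_iff: "x \<in> carrier G \<Longrightarrow> y \<in> carrier G \<Longrightarrow> R x y \<longleftrightarrow> R \<one> (inv x \<otimes> y)"
  using R_left_iff[of "inv x" x y] by simp

lemma neg_iff: "g \<in> carrier G \<Longrightarrow> R g \<one> \<longleftrightarrow> R \<one> (inv g)"
  using pos_iff[of g "\<one>"] by simp

lemma pos_mult: "R \<one> g \<Longrightarrow> R \<one> h \<Longrightarrow> R \<one> (g \<otimes> h)"
proof -
  assume a: "R \<one> g" "R \<one> h"
  hence "R (g \<otimes> \<one>) (g \<otimes> h)" using R_carrier by (intro R_left) auto
  hence "R g (g \<otimes> h)" using R_carrier a by simp
  thus ?thesis using a R_trans by blast
qed

lemma pos_inv_not: "R \<one> g \<Longrightarrow> \<not> R \<one> (inv g)"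
  using neg_iff R_asym R_carrier by blast

lemma pos_or_inv: "g \<in> carrier G \<Longrightarrow> g \<noteq> \<one> \<Longrightarrow> R \<one> g \<or> R \<one> (inv g)"
  using R_total[of "\<one>" g] neg_iff by auto

lemma pos_pow: "R \<one> g \<Longrightarrow> R \<one> (g [^] Suc n)"
proof (induction n)
  case 0 thus ?case using R_carrier by simp
next
  case (Suc n) thus ?case using pos_mult by simp
qed

lemma pos_pow_iff: "g \<in> carrier G \<Longrightarrow> g \<noteq> \<one> \<Longrightarrow> n > 0 \<Longrightarrow> R \<one> (g [^] (n::nat)) \<Longrightarrow> R \<one> g"
proof -
  assume g: "g \<in> carrier G" "g \<noteq> \<one>" and n: "n > 0" and p: "R \<one> (g [^] n)"
  show "R \<one> g"
  proof (rule ccontr)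
    assume "\<not> R \<one> g"
    hence "R \<one> (inv g)" using pos_or_inv g by blast
    hence "R \<one> (inv g [^] n)" using pos_pow[of "inv g" "n - 1"] n by simp
    hence "R \<one> (inv (g [^] n))" using g by (simp add: nat_pow_inv)
    thus False using p pos_inv_not by blast
  qed
qed

lemma converse_lord: "lord G (\<lambda>x y. R y x)"
proof -
  have "left_order G (\<lambda>x y. R y x)"
    unfolding left_order_def using lo1 lo2 lo3 lo4 lo5 by blast
  thus ?thesis by unfold_locales
qed

end

lemma lordI: "left_order (BS q) R \<Longrightarrow> lord (BS q) R"
  by (simp add: lord_def lord_axioms_def group_BS)


section \<open>Structure of left orders on BS(1,q)\<close>

definition aff :: "int \<Rightarrow> gen list set \<Rightarrow> real \<Rightarrow> real" where
  "aff q g x = of_int q powi gn g * x + gr q g"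

lemma aff_mult: "q \<noteq> 0 \<Longrightarrow> g \<in> carrier (BS q) \<Longrightarrow> h \<in> carrier (BS q) \<Longrightarrow>
    aff q (g \<otimes>\<^bsub>BS q\<^esub> h) x = aff q g (aff q h x)"
  by (simp add: aff_def gn_mult gr_mult power_int_add algebra_simps)

lemma aff_one [simp]: "q \<noteq> 0 \<Longrightarrow> aff q \<one>\<^bsub>BS q\<^esub> x = x"
  by (simp add: aff_def)

lemma aff_inv_cancel: "q \<noteq> 0 \<Longrightarrow> g \<in> carrier (BS q) \<Longrightarrow> aff q (inv\<^bsub>BS q\<^esub> g) (aff q g x) = x"
  "q \<noteq> 0 \<Longrightarrow> g \<in> carrier (BS q) \<Longrightarrow> aff q g (aff q (inv\<^bsub>BS q\<^esub> g) x) = x"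
proof -
  interpret G: group "BS q" by (rule group_BS)
  show "q \<noteq> 0 \<Longrightarrow> g \<in> carrier (BS q) \<Longrightarrow> aff q (inv\<^bsub>BS q\<^esub> g) (aff q g x) = x"
    by (simp add: aff_mult[symmetric])
  show "q \<noteq> 0 \<Longrightarrow> g \<in> carrier (BS q) \<Longrightarrow> aff q g (aff q (inv\<^bsub>BS q\<^esub> g) x) = x"
    by (simp add: aff_mult[symmetric])
qed

lemma aff_strict_mono: "q > 0 \<Longrightarrow> x < y \<Longrightarrow> aff q g x < aff q g y"
  by (simp add: aff_def)

lemma aff_inv_gt: "q > 0 \<Longrightarrow> g \<in> carrier (BS q) \<Longrightarrow> aff q (inv\<^bsub>BS q\<^esub> g) x > x \<longleftrightarrow> aff q g x < x"
proof -
  assume q: "q > 0" and g: "g \<in> carrier (BS q)"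
  have e: "aff q g (aff q (inv\<^bsub>BS q\<^esub> g) x) = x" using aff_inv_cancel(2)[of q g x] q g by simp
  show ?thesis
  proof
    assume "aff q (inv\<^bsub>BS q\<^esub> g) x > x"
    from aff_strict_mono[OF q this, of g] e show "aff q g x < x" by simp
  next
    assume a: "aff q g x < x"
    show "aff q (inv\<^bsub>BS q\<^esub> g) x > x"
    proof (rule ccontr)
      assume "\<not> aff q (inv\<^bsub>BS q\<^esub> g) x > x"
      hence "aff q (inv\<^bsub>BS q\<^esub> g) x \<le> x" by simp
      hence "aff q g (aff q (inv\<^bsub>BS q\<^esub> g) x) \<le> aff q g x"
        using aff_strict_mono[OF q, of _ _ g] by (cases "aff q (inv\<^bsub>BS q\<^esub> g) x = x") (auto simp: less_le)
      thus False using e a by simp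
    qed
  qed
qed

lemma aff_inv_lt: "q > 0 \<Longrightarrow> g \<in> carrier (BS q) \<Longrightarrow> aff q (inv\<^bsub>BS q\<^esub> g) x < x \<longleftrightarrow> aff q g x > x"
proof -
  assume q: "q > 0" and g: "g \<in> carrier (BS q)"
  interpret G: group "BS q" by (rule group_BS)
  have "aff q (inv\<^bsub>BS q\<^esub> (inv\<^bsub>BS q\<^esub> g)) x > x \<longleftrightarrow> aff q (inv\<^bsub>BS q\<^esub> g) x < x"
    by (rule aff_inv_gt[OF q]) (simp add: g)
  thus ?thesis using g by simp
qed

lemma bs_act_aff: "q \<noteq> 0 \<Longrightarrow> bs_act q g x = aff q g x"
  by (simp add: bs_act_eq aff_def)

lemma gn_A [simp]: "gn (aA q) = 1" by simp
lemma gr_A [simp]: "q \<noteq> 0 \<Longrightarrow> gr q (aA q) = 0" by simp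
lemma gn_B [simp]: "gn (bB q) = 0" by simp
lemma gr_B [simp]: "q \<noteq> 0 \<Longrightarrow> gr q (bB q) = 1" by simp

lemma gn_pow: "g \<in> carrier (BS q) \<Longrightarrow> gn (g [^]\<^bsub>BS q\<^esub> (n::nat)) = int n * gn g"
proof (induction n)
  case 0 thus ?case by simp
next
  case (Suc n)
  interpret G: group "BS q" by (rule group_BS)
  show ?case using Suc by (simp add: gn_mult algebra_simps)
qed

lemma gr_pow_N: "q \<noteq> 0 \<Longrightarrow> g \<in> carrier (BS q) \<Longrightarrow> gn g = 0 \<Longrightarrow> gr q (g [^]\<^bsub>BS q\<^esub> (n::nat)) = of_nat n * gr q g"
proof (induction n)
  case 0 thus ?case by simp
next
  case (Suc n)
  interpret G: group "BS q" by (rule group_BS)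
  show ?case using Suc by (simp add: gr_mult gn_pow algebra_simps)
qed

lemma aff_pow_fix: "q \<noteq> 0 \<Longrightarrow> g \<in> carrier (BS q) \<Longrightarrow> aff q g p = p \<Longrightarrow> aff q (g [^]\<^bsub>BS q\<^esub> (n::nat)) p = p"
proof (induction n)
  case 0 thus ?case by simp
next
  case (Suc n)
  interpret G: group "BS q" by (rule group_BS)
  show ?case using Suc by (simp add: aff_mult)
qed

lemma one_iff: "q \<noteq> 0 \<Longrightarrow> g \<in> carrier (BS q) \<Longrightarrow> g = \<one>\<^bsub>BS q\<^esub> \<longleftrightarrow> gn g = 0 \<and> gr q g = 0"
proof
  assume "q \<noteq> 0" "g \<in> carrier (BS q)" "g = \<one>\<^bsub>BS q\<^esub>"
  thus "gn g = 0 \<and> gr q g = 0" by simp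
next
  assume "q \<noteq> 0" "g \<in> carrier (BS q)" "gn g = 0 \<and> gr q g = 0"
  thus "g = \<one>\<^bsub>BS q\<^esub>" using kernel_trivial by blast
qed

lemma N_sign:
  assumes L: "lord (BS q) R" and q: "q \<noteq> 0"
    and c: "c \<in> carrier (BS q)" "gn c = 0" and d: "d \<in> carrier (BS q)" "gn d = 0"
    and s: "gr q c * gr q d > 0" and pc: "R \<one>\<^bsub>BS q\<^esub> c"
  shows "R \<one>\<^bsub>BS q\<^esub> d"
proof -
  interpret lord "BS q" R by fact
  obtain mc kc where mc: "gr q c = of_int kc * of_int q powi (- int mc)" using gr_form[OF q c(1)] by blast
  obtain md kd where md: "gr q d = of_int kd * of_int q powi (- int md)" using gr_form[OF q d(1)] by blast
  define T where "T = (of_int q :: real) powi (- int (mc + md))"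
  define \<alpha> where "\<alpha> = kc * q ^ md"
  define \<beta> where "\<beta> = kd * q ^ mc"
  have qr: "(of_int q :: real) \<noteq> 0" using q by simp
  have T0: "T \<noteq> 0" using qr by (simp add: T_def)
  have split: "(of_int q :: real) powi (- int m) = of_int q ^ m' * T" if "m + m' = mc + md" for m m'
  proof -
    have ee: "- int m = int m' + (- int (mc + md))" using that by simp
    have "(of_int q :: real) powi (- int m) = of_int q powi (int m' + (- int (mc + md)))"
      by (simp only: ee)
    also have "\<dots> = of_int q ^ m' * T" using qr by (simp add: power_int_add T_def)
    finally show ?thesis .
  qed
  have gc: "gr q c = of_int \<alpha> * T" unfolding mc \<alpha>_def using split[of mc md] by simp
  have gd: "gr q d = of_int \<beta> * T" unfolding md \<beta>_def using split[of md mc] by simp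
  have "of_int (\<alpha> * \<beta>) * (T * T) > (0::real)" using s by (simp add: gc gd algebra_simps)
  moreover have "T * T > 0" using T0 by (auto simp: zero_less_mult_iff linorder_neq_iff)
  ultimately have ab: "\<alpha> * \<beta> > 0" by (simp add: zero_less_mult_iff)
  define i where "i = nat \<bar>\<beta>\<bar>"
  define j where "j = nat \<bar>\<alpha>\<bar>"
  have ij: "i > 0" "j > 0" using ab by (auto simp: i_def j_def zero_less_mult_iff)
  have eqint: "\<bar>\<beta>\<bar> * \<alpha> = \<bar>\<alpha>\<bar> * \<beta>" using ab by (auto simp: zero_less_mult_iff)
  have "gr q (c [^]\<^bsub>BS q\<^esub> i) = gr q (d [^]\<^bsub>BS q\<^esub> j)"
  proof -
    have ri: "real i = of_int \<bar>\<beta>\<bar>" by (simp add: i_def)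
    have "gr q (c [^]\<^bsub>BS q\<^esub> i) = real i * gr q c" by (rule gr_pow_N[OF q c(1) c(2)])
    also have "\<dots> = of_int (\<bar>\<beta>\<bar> * \<alpha>) * T" by (simp only: ri gc) simp
    also have "\<dots> = of_int (\<bar>\<alpha>\<bar> * \<beta>) * T" by (simp only: eqint)
    also have "\<dots> = real j * gr q d" by (simp add: j_def gd)
    also have "\<dots> = gr q (d [^]\<^bsub>BS q\<^esub> j)" by (rule gr_pow_N[OF q d(1) d(2), symmetric])
    finally show ?thesis .
  qed
  moreover have "gn (c [^]\<^bsub>BS q\<^esub> i) = gn (d [^]\<^bsub>BS q\<^esub> j)" using c d by (simp add: gn_pow)
  ultimately have eq: "c [^]\<^bsub>BS q\<^esub> i = d [^]\<^bsub>BS q\<^esub> j" using faithful[OF q] c d by simp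
  have "R \<one>\<^bsub>BS q\<^esub> (c [^]\<^bsub>BS q\<^esub> i)" using pos_pow[OF pc, of "i - 1"] ij by simp
  hence "R \<one>\<^bsub>BS q\<^esub> (d [^]\<^bsub>BS q\<^esub> j)" using eq by simp
  moreover have "d \<noteq> \<one>\<^bsub>BS q\<^esub>" using s q by auto
  ultimately show ?thesis using pos_pow_iff[OF d(1)] ij by blast
qed


lemma powi_odd_neg: "q < 0 \<Longrightarrow> odd n \<Longrightarrow> (of_int q :: real) powi n < 0"
  by (auto simp: power_int_def power_less_zero_eq even_nat_iff)

lemma odd_above:
  assumes L: "lord (BS q) R" and q: "q < 0" and g: "g \<in> carrier (BS q)" "odd (gn g)" "R \<one>\<^bsub>BS q\<^esub> g"
    and c: "c \<in> carrier (BS q)" "gn c = 0"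
  shows "R c g"
proof (rule ccontr)
  interpret lord "BS q" R by fact
  have q0: "q \<noteq> 0" using q by simp
  assume nR: "\<not> R c g"
  have "c \<noteq> g" using g c by auto
  hence Rgc: "R g c" using R_total[OF c(1) g(1)] nR by blast
  hence Rc: "R \<one>\<^bsub>BS q\<^esub> c" using g(3) R_trans by blast
  have grc: "gr q c \<noteq> 0"
  proof
    assume "gr q c = 0"
    hence "c = \<one>\<^bsub>BS q\<^esub>" using kernel_trivial[OF q0 c(1) c(2)] by simp
    thus False using Rc R_irrefl by simp
  qed
  have p1: "R \<one>\<^bsub>BS q\<^esub> (inv\<^bsub>BS q\<^esub> g \<otimes>\<^bsub>BS q\<^esub> c)" using Rgc pos_iff g(1) c(1) by blast
  define c' where "c' = inv\<^bsub>BS q\<^esub> g \<otimes>\<^bsub>BS q\<^esub> c \<otimes>\<^bsub>BS q\<^esub> g"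
  have c'C: "c' \<in> carrier (BS q)" using g c by (simp add: c'_def)
  have gnc': "gn c' = 0" using g c by (simp add: c'_def gn_mult gn_inv)
  have grc': "gr q c' = of_int q powi (- gn g) * gr q c"
    using g c q0 by (simp add: c'_def gr_mult gr_inv gn_mult gn_inv algebra_simps)
  have neg: "(of_int q :: real) powi (- gn g) < 0" using powi_odd_neg[OF q] g(2) by simp
  have icC: "inv\<^bsub>BS q\<^esub> c' \<in> carrier (BS q)" using c'C by simp
  have gnic: "gn (inv\<^bsub>BS q\<^esub> c') = 0" using c'C gnc' by (simp add: gn_inv)
  have gric: "gr q (inv\<^bsub>BS q\<^esub> c') = - gr q c'" using c'C gnc' q0 by (simp add: gr_inv)
  have "gr q c * gr q (inv\<^bsub>BS q\<^esub> c') = - (of_int q powi (- gn g)) * (gr q c * gr q c)"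
    by (simp add: gric grc' algebra_simps)
  moreover have "gr q c * gr q c > 0" using grc by (auto simp: zero_less_mult_iff linorder_neq_iff)
  moreover have "of_int q powi (- gn g) * (gr q c * gr q c) < 0" using neg \<open>gr q c * gr q c > 0\<close> by (rule mult_neg_pos)
  ultimately have "gr q c * gr q (inv\<^bsub>BS q\<^esub> c') > 0" by simp
  hence Ric: "R \<one>\<^bsub>BS q\<^esub> (inv\<^bsub>BS q\<^esub> c')" using N_sign[OF L q0 c icC gnic _ Rc] by simp
  have eq: "inv\<^bsub>BS q\<^esub> g \<otimes>\<^bsub>BS q\<^esub> c = c' \<otimes>\<^bsub>BS q\<^esub> inv\<^bsub>BS q\<^esub> g"
    using g c by (simp add: c'_def m_assoc)
  have "R (inv\<^bsub>BS q\<^esub> c' \<otimes>\<^bsub>BS q\<^esub> \<one>\<^bsub>BS q\<^esub>) (inv\<^bsub>BS q\<^esub> c' \<otimes>\<^bsub>BS q\<^esub> (c' \<otimes>\<^bsub>BS q\<^esub> inv\<^bsub>BS q\<^esub> g))"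
    using R_left[OF icC] p1 eq by simp
  hence "R (inv\<^bsub>BS q\<^esub> c') (inv\<^bsub>BS q\<^esub> g)" using c'C g(1) by (simp add: m_assoc[symmetric])
  hence "R \<one>\<^bsub>BS q\<^esub> (inv\<^bsub>BS q\<^esub> g)" using Ric R_trans by blast
  thus False using pos_inv_not g(3) by blast
qed

lemma gn_Apow [simp]: "gn (aA q [^]\<^bsub>BS q\<^esub> (n::nat)) = int n"
  by (simp add: cls_rep[symmetric])

lemma odd_pos:
  assumes L: "lord (BS q) R" and q: "q < 0" and A: "R \<one>\<^bsub>BS q\<^esub> (aA q)"
    and g: "g \<in> carrier (BS q)" "odd (gn g)" "gn g > 0"
  shows "R \<one>\<^bsub>BS q\<^esub> g"
proof -
  interpret lord "BS q" R by fact
  define n where "n = nat (gn g)"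
  define An where "An = aA q [^]\<^bsub>BS q\<^esub> n"
  have AnC: "An \<in> carrier (BS q)" by (simp add: An_def)
  have "gn An = int n" unfolding An_def by (rule gn_Apow)
  hence gnAn: "gn An = gn g" using g by (simp add: n_def)
  have "n > 0" using g by (simp add: n_def)
  hence "Suc (n - 1) = n" by simp
  hence "R \<one>\<^bsub>BS q\<^esub> An" using pos_pow[OF A, of "n - 1"] by (simp add: An_def)
  define c where "c = g \<otimes>\<^bsub>BS q\<^esub> inv\<^bsub>BS q\<^esub> An"
  have cC: "c \<in> carrier (BS q)" using g AnC by (simp add: c_def)
  have gnc: "gn (inv\<^bsub>BS q\<^esub> c) = 0" using g AnC cC gnAn by (simp add: c_def gn_mult gn_inv)
  have "R (inv\<^bsub>BS q\<^esub> c) An" using odd_above[OF L q AnC _ \<open>R \<one>\<^bsub>BS q\<^esub> An\<close> _ gnc] g gnAn cC by simp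
  hence "R (c \<otimes>\<^bsub>BS q\<^esub> inv\<^bsub>BS q\<^esub> c) (c \<otimes>\<^bsub>BS q\<^esub> An)" using R_left[OF cC] by blast
  moreover have "c \<otimes>\<^bsub>BS q\<^esub> An = g" using g AnC by (simp add: c_def m_assoc)
  ultimately show ?thesis using cC by simp
qed

lemma all_pos:
  assumes L: "lord (BS q) R" and q: "q < 0" and A: "R \<one>\<^bsub>BS q\<^esub> (aA q)"
    and g: "g \<in> carrier (BS q)" "gn g > 0"
  shows "R \<one>\<^bsub>BS q\<^esub> g"
proof (cases "odd (gn g)")
  case True thus ?thesis using odd_pos[OF L q A g(1)] g by simp
next
  case False
  interpret lord "BS q" R by fact
  define h where "h = g \<otimes>\<^bsub>BS q\<^esub> inv\<^bsub>BS q\<^esub> (aA q)"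
  have hC: "h \<in> carrier (BS q)" using g by (simp add: h_def)
  have gnh: "gn h = gn g - 1" using g by (simp add: h_def gn_mult gn_inv)
  have "gn g \<ge> 2" using False g(2) by presburger
  hence Rh: "R \<one>\<^bsub>BS q\<^esub> h" using odd_pos[OF L q A hC] gnh False by simp
  show ?thesis
  proof (rule ccontr)
    assume "\<not> R \<one>\<^bsub>BS q\<^esub> g"
    moreover have "g \<noteq> \<one>\<^bsub>BS q\<^esub>" using g by auto
    ultimately have "R \<one>\<^bsub>BS q\<^esub> (inv\<^bsub>BS q\<^esub> g)" using pos_or_inv g(1) by blast
    hence "R \<one>\<^bsub>BS q\<^esub> (aA q \<otimes>\<^bsub>BS q\<^esub> inv\<^bsub>BS q\<^esub> g)" using A pos_mult by blast
    moreover have "inv\<^bsub>BS q\<^esub> h = aA q \<otimes>\<^bsub>BS q\<^esub> inv\<^bsub>BS q\<^esub> g" using g by (simp add: h_def inv_mult_group)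
    moreover have "\<not> R \<one>\<^bsub>BS q\<^esub> (inv\<^bsub>BS q\<^esub> h)" using pos_inv_not[OF Rh] .
    ultimately show False by simp
  qed
qed

lemma neg_half:
  assumes L: "lord (BS q) R" and q: "q < 0"
  shows "(\<forall>g\<in>positive_cone (BS q) R. gn g \<ge> 0) \<or> (\<forall>g\<in>positive_cone (BS q) R. gn g \<le> 0)"
proof -
  interpret lord "BS q" R by fact
  have "aA q \<noteq> \<one>\<^bsub>BS q\<^esub>" by (metis gn_A gn_one zero_neq_one)
  hence "R \<one>\<^bsub>BS q\<^esub> (aA q) \<or> R (aA q) \<one>\<^bsub>BS q\<^esub>" using R_total[of "\<one>\<^bsub>BS q\<^esub>" "aA q"] by auto
  thus ?thesis
  proof
    assume A: "R \<one>\<^bsub>BS q\<^esub> (aA q)"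
    have "gn g \<ge> 0" if "g \<in> positive_cone (BS q) R" for g
    proof (rule ccontr)
      assume "\<not> gn g \<ge> 0"
      have gC: "g \<in> carrier (BS q)" "R \<one>\<^bsub>BS q\<^esub> g" using that by (auto simp: positive_cone_def)
      have "gn (inv\<^bsub>BS q\<^esub> g) > 0" using gC \<open>\<not> gn g \<ge> 0\<close> by (simp add: gn_inv)
      hence "R \<one>\<^bsub>BS q\<^esub> (inv\<^bsub>BS q\<^esub> g)" using all_pos[OF L q A] gC by simp
      thus False using pos_inv_not gC by blast
    qed
    thus ?thesis by blast
  next
    assume A: "R (aA q) \<one>\<^bsub>BS q\<^esub>"
    have L': "lord (BS q) (\<lambda>x y. R y x)" by (rule converse_lord)
    have "gn g \<le> 0" if "g \<in> positive_cone (BS q) R" for g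
    proof (rule ccontr)
      assume "\<not> gn g \<le> 0"
      have gC: "g \<in> carrier (BS q)" "R \<one>\<^bsub>BS q\<^esub> g" using that by (auto simp: positive_cone_def)
      have "R g \<one>\<^bsub>BS q\<^esub>" using all_pos[OF L' q _ gC(1)] A \<open>\<not> gn g \<le> 0\<close> by simp
      thus False using gC R_asym by blast
    qed
    thus ?thesis by blast
  qed
qed


definition fp :: "int \<Rightarrow> gen list set \<Rightarrow> real" where
  "fp q g = gr q g / (1 - of_int q powi gn g)"

lemma Qgt1: "q \<ge> 2 \<Longrightarrow> n > 0 \<Longrightarrow> (of_int q :: real) powi n > 1"
proof -
  assume "q \<ge> 2" "n > 0"
  hence "(of_int q :: real) powi n > of_int q powi 0"
    by (intro power_int_strict_increasing) simp_all
  thus ?thesis by simp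
qed

lemma aff_fp: "q \<ge> 2 \<Longrightarrow> gn g > 0 \<Longrightarrow> aff q g x = of_int q powi gn g * (x - fp q g) + fp q g"
proof -
  assume q: "q \<ge> 2" and g: "gn g > 0"
  have ne: "1 - (of_int q :: real) powi gn g \<noteq> 0" using Qgt1[OF q g] by simp
  have "(1 - of_int q powi gn g) * fp q g = gr q g" using ne by (simp add: fp_def)
  moreover have "of_int q powi gn g * (x - fp q g) + fp q g = of_int q powi gn g * x + (1 - of_int q powi gn g) * fp q g"
    by (simp add: algebra_simps)
  ultimately show ?thesis unfolding aff_def by simp
qed

lemma fix_fp: "q \<ge> 2 \<Longrightarrow> gn g > 0 \<Longrightarrow> aff q g p = p \<Longrightarrow> p = fp q g"
proof -
  assume q: "q \<ge> 2" and g: "gn g > 0" and a: "aff q g p = p"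
  have "(of_int q powi gn g - 1) * (p - fp q g) = 0" using aff_fp[OF q g, of p] a by (simp add: algebra_simps)
  thus ?thesis using Qgt1[OF q g] by simp
qed

lemma fp_pow: "q \<ge> 2 \<Longrightarrow> g \<in> carrier (BS q) \<Longrightarrow> gn g > 0 \<Longrightarrow> n > 0 \<Longrightarrow> fp q (g [^]\<^bsub>BS q\<^esub> (n::nat)) = fp q g"
proof -
  assume q: "q \<ge> 2" and g: "g \<in> carrier (BS q)" "gn g > 0" and n: "n > 0"
  have "aff q g (fp q g) = fp q g" using aff_fp[OF q g(2)] by simp
  hence "aff q (g [^]\<^bsub>BS q\<^esub> n) (fp q g) = fp q g" using aff_pow_fix[OF _ g(1)] q by simp
  moreover have "gn (g [^]\<^bsub>BS q\<^esub> n) > 0" using g n by (simp add: gn_pow)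
  ultimately show ?thesis using fix_fp[OF q] by metis
qed

lemma gr_fp: "q \<ge> 2 \<Longrightarrow> gn g > 0 \<Longrightarrow> gr q g = fp q g * (1 - of_int q powi gn g)"
proof -
  assume q: "q \<ge> 2" and g: "gn g > 0"
  have ne: "1 - (of_int q :: real) powi gn g \<noteq> 0" using Qgt1[OF q g] by simp
  thus ?thesis by (simp add: fp_def)
qed

lemma mono_fp:
  assumes L: "lord (BS q) R" and q: "q \<ge> 2" and B: "R \<one>\<^bsub>BS q\<^esub> (bB q)"
    and g: "g \<in> carrier (BS q)" "gn g > 0" "R \<one>\<^bsub>BS q\<^esub> g"
    and h: "h \<in> carrier (BS q)" "gn h > 0" and le: "fp q h \<le> fp q g"
  shows "R \<one>\<^bsub>BS q\<^esub> h"
proof -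
  interpret lord "BS q" R by fact
  have q0: "q \<noteq> 0" using q by simp
  define a where "a = nat (gn g)"
  define b where "b = nat (gn h)"
  have ab: "a > 0" "b > 0" using g h by (simp_all add: a_def b_def)
  define g' where "g' = g [^]\<^bsub>BS q\<^esub> b"
  define h' where "h' = h [^]\<^bsub>BS q\<^esub> a"
  have C: "g' \<in> carrier (BS q)" "h' \<in> carrier (BS q)" using g h by (simp_all add: g'_def h'_def)
  have "gn g' = int b * gn g" unfolding g'_def by (rule gn_pow[OF g(1)])
  moreover have "int b = gn h" using h by (simp add: b_def)
  ultimately have gng': "gn g' = gn g * gn h" by simp
  have "gn h' = int a * gn h" unfolding h'_def by (rule gn_pow[OF h(1)])
  moreover have "int a = gn g" using g by (simp add: a_def)
  ultimately have gnh': "gn h' = gn g * gn h" by simp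
  define N where "N = gn g * gn h"
  have N: "N > 0" using g h by (simp add: N_def)
  have fpg': "fp q g' = fp q g" unfolding g'_def by (rule fp_pow[OF q g(1) g(2) ab(2)])
  have fph': "fp q h' = fp q h" unfolding h'_def by (rule fp_pow[OF q h(1) h(2) ab(1)])
  define Q where "Q = (of_int q :: real) powi N"
  have Q1: "Q > 1" using Qgt1[OF q N] by (simp add: Q_def)
  have grg': "gr q g' = fp q g * (1 - Q)" using gr_fp[OF q, of g'] gng' N fpg' by (simp add: Q_def N_def)
  have grh': "gr q h' = fp q h * (1 - Q)" using gr_fp[OF q, of h'] gnh' N fph' by (simp add: Q_def N_def)
  have Rg': "R \<one>\<^bsub>BS q\<^esub> g'" using pos_pow[OF g(3), of "b - 1"] ab by (simp add: g'_def)
  define c where "c = h' \<otimes>\<^bsub>BS q\<^esub> inv\<^bsub>BS q\<^esub> g'"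
  have cC: "c \<in> carrier (BS q)" using C by (simp add: c_def)
  have gnc: "gn c = 0" using C gng' gnh' by (simp add: c_def gn_mult gn_inv)
  have QQ: "Q * of_int q powi (- N) = 1" using q0 by (simp add: Q_def power_int_minus)
  have "gr q c = gr q h' + Q * (- (of_int q powi (- N)) * gr q g')"
    using C q0 gnh' gng' by (simp add: c_def gr_mult gr_inv Q_def N_def)
  also have "\<dots> = gr q h' - (Q * of_int q powi (- N)) * gr q g'" by (simp add: algebra_simps)
  also have "\<dots> = (fp q g - fp q h) * (Q - 1)" by (simp only: QQ grg' grh') (simp add: algebra_simps)
  finally have grc: "gr q c = (fp q g - fp q h) * (Q - 1)" .
  have ch: "c \<otimes>\<^bsub>BS q\<^esub> g' = h'" using C by (simp add: c_def m_assoc)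
  have Rh': "R \<one>\<^bsub>BS q\<^esub> h'"
  proof (cases "fp q h = fp q g")
    case True
    hence "c = \<one>\<^bsub>BS q\<^esub>" using kernel_trivial[OF q0 cC gnc] grc by simp
    thus ?thesis using ch Rg' C by simp
  next
    case False
    hence "gr q c > 0" using grc le Q1 by simp
    hence "R \<one>\<^bsub>BS q\<^esub> c" using N_sign[OF L q0 _ _ cC gnc _ B] q0 by simp
    thus ?thesis using pos_mult[OF _ Rg'] ch by metis
  qed
  have "h \<noteq> \<one>\<^bsub>BS q\<^esub>" using h by auto
  thus ?thesis using pos_pow_iff[OF h(1) _ ab(1)] Rh' by (simp add: h'_def)
qed

lemma classify:
  assumes L: "lord (BS q) R" and q: "q \<ge> 2" and B: "R \<one>\<^bsub>BS q\<^esub> (bB q)"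
  shows "(\<forall>g\<in>carrier (BS q). gn g > 0 \<longrightarrow> R g \<one>\<^bsub>BS q\<^esub>) \<or>
         (\<forall>g\<in>carrier (BS q). gn g > 0 \<longrightarrow> R \<one>\<^bsub>BS q\<^esub> g) \<or>
         (\<exists>x. \<forall>g\<in>carrier (BS q). aff q g x \<noteq> x \<longrightarrow> (R \<one>\<^bsub>BS q\<^esub> g \<longleftrightarrow> aff q g x > x))"
proof -
  interpret lord "BS q" R by fact
  have q0: "q \<noteq> 0" and qp: "q > 0" using q by simp_all
  define S where "S = fp q ` {g \<in> carrier (BS q). gn g > 0 \<and> R \<one>\<^bsub>BS q\<^esub> g}"
  have ne1: "g \<noteq> \<one>\<^bsub>BS q\<^esub>" if "gn g > 0" for g using that by auto
  show ?thesis
  proof (cases "S = {}")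
    case True
    have "R g \<one>\<^bsub>BS q\<^esub>" if "g \<in> carrier (BS q)" "gn g > 0" for g
    proof -
      have "\<not> R \<one>\<^bsub>BS q\<^esub> g" using True that by (auto simp: S_def)
      thus ?thesis using R_total[OF that(1), of "\<one>\<^bsub>BS q\<^esub>"] ne1[OF that(2)] by auto
    qed
    thus ?thesis by blast
  next
    case Sne: False
    show ?thesis
    proof (cases "bdd_above S")
      case False
      have "R \<one>\<^bsub>BS q\<^esub> h" if "h \<in> carrier (BS q)" "gn h > 0" for h
      proof -
        from False obtain s where "s \<in> S" "s > fp q h" unfolding bdd_above_def by (meson not_le)
        then obtain g where g: "g \<in> carrier (BS q)" "gn g > 0" "R \<one>\<^bsub>BS q\<^esub> g" "s = fp q g"
          by (auto simp: S_def)
        show ?thesis using mono_fp[OF L q B g(1-3) that] g(4) \<open>s > fp q h\<close> by simp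
      qed
      thus ?thesis by blast
    next
      case bdd: True
      define x where "x = Sup S"
      have partA: "R \<one>\<^bsub>BS q\<^esub> g \<longleftrightarrow> aff q g x > x" if g: "g \<in> carrier (BS q)" "gn g > 0" "aff q g x \<noteq> x" for g
      proof -
        have af: "aff q g x - x = (of_int q powi gn g - 1) * (x - fp q g)"
          using aff_fp[OF q g(2), of x] by (simp add: algebra_simps)
        have Q1: "(of_int q :: real) powi gn g > 1" using Qgt1[OF q g(2)] .
        have iff: "aff q g x > x \<longleftrightarrow> x > fp q g"
        proof -
          have "aff q g x > x \<longleftrightarrow> (of_int q powi gn g - 1) * (x - fp q g) > 0" using af by linarith
          also have "\<dots> \<longleftrightarrow> x - fp q g > 0" using Q1 by (simp add: zero_less_mult_iff)
          finally show ?thesis by simp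
        qed
        have nx: "x \<noteq> fp q g" using g(3) aff_fp[OF q g(2), of x] by auto
        show ?thesis
        proof
          assume "R \<one>\<^bsub>BS q\<^esub> g"
          hence "fp q g \<in> S" using g by (auto simp: S_def)
          hence "fp q g \<le> x" unfolding x_def using bdd by (rule cSup_upper)
          thus "aff q g x > x" using nx iff by simp
        next
          assume "aff q g x > x"
          hence "fp q g < Sup S" using iff by (simp add: x_def)
          then obtain s where "s \<in> S" "fp q g < s" using less_cSup_iff[OF Sne bdd] by blast
          then obtain g0 where g0: "g0 \<in> carrier (BS q)" "gn g0 > 0" "R \<one>\<^bsub>BS q\<^esub> g0" "s = fp q g0"
            by (auto simp: S_def)
          show "R \<one>\<^bsub>BS q\<^esub> g" using mono_fp[OF L q B g0(1-3) g(1,2)] g0(4) \<open>fp q g < s\<close> by simp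
        qed
      qed
      have partB: "R \<one>\<^bsub>BS q\<^esub> g \<longleftrightarrow> aff q g x > x" if g: "g \<in> carrier (BS q)" "gn g = 0" "aff q g x \<noteq> x" for g
      proof -
        have af: "aff q g x = x + gr q g" using g by (simp add: aff_def)
        show ?thesis
        proof (cases "gr q g > 0")
          case True
          hence "R \<one>\<^bsub>BS q\<^esub> g" using N_sign[OF L q0 _ _ g(1,2) _ B] q0 by simp
          thus ?thesis using af True by simp
        next
          case False
          hence neg: "gr q g < 0" using g(3) af by simp
          have "gr q (inv\<^bsub>BS q\<^esub> g) > 0" using neg g q0 by (simp add: gr_inv)
          hence "R \<one>\<^bsub>BS q\<^esub> (inv\<^bsub>BS q\<^esub> g)" using N_sign[OF L q0 _ _ _ _ _ B, of "inv\<^bsub>BS q\<^esub> g"] q0 g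
            by (simp add: gn_inv)
          hence "\<not> R \<one>\<^bsub>BS q\<^esub> g" using pos_inv_not g(1) by (metis inv_inv)
          thus ?thesis using af neg by simp
        qed
      qed
      have partC: "R \<one>\<^bsub>BS q\<^esub> g \<longleftrightarrow> aff q g x > x" if g: "g \<in> carrier (BS q)" "gn g < 0" "aff q g x \<noteq> x" for g
      proof -
        define h where "h = inv\<^bsub>BS q\<^esub> g"
        have hC: "h \<in> carrier (BS q)" "gn h > 0" using g by (simp_all add: h_def gn_inv)
        have "aff q h x \<noteq> x"
        proof
          assume "aff q h x = x"
          hence "aff q g (aff q h x) = aff q g x" by simp
          thus False using aff_inv_cancel(2)[OF q0 g(1), of x] g(3) by (simp add: h_def)
        qed
        hence A: "R \<one>\<^bsub>BS q\<^esub> h \<longleftrightarrow> aff q h x > x" using partA hC by blast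
        have B2: "aff q h x < x \<longleftrightarrow> aff q g x > x" unfolding h_def by (rule aff_inv_lt[OF qp g(1)])
        have "g \<noteq> \<one>\<^bsub>BS q\<^esub>" using g by auto
        hence "R \<one>\<^bsub>BS q\<^esub> g \<longleftrightarrow> \<not> R \<one>\<^bsub>BS q\<^esub> h"
          using pos_or_inv[OF g(1)] pos_inv_not by (auto simp: h_def)
        thus ?thesis using A B2 \<open>aff q h x \<noteq> x\<close> by auto
      qed
      have "\<forall>g\<in>carrier (BS q). aff q g x \<noteq> x \<longrightarrow> (R \<one>\<^bsub>BS q\<^esub> g \<longleftrightarrow> aff q g x > x)"
      proof (intro ballI impI)
        fix g assume "g \<in> carrier (BS q)" "aff q g x \<noteq> x"
        consider "gn g < 0" | "gn g = 0" | "gn g > 0" by linarith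
        thus "R \<one>\<^bsub>BS q\<^esub> g \<longleftrightarrow> aff q g x > x"
        proof cases
          case 1 thus ?thesis using partC \<open>g \<in> carrier (BS q)\<close> \<open>aff q g x \<noteq> x\<close> by blast
        next
          case 2 thus ?thesis using partB \<open>g \<in> carrier (BS q)\<close> \<open>aff q g x \<noteq> x\<close> by blast
        next
          case 3 thus ?thesis using partA \<open>g \<in> carrier (BS q)\<close> \<open>aff q g x \<noteq> x\<close> by blast
        qed
      qed
      thus ?thesis by blast
    qed
  qed
qed

lemma pos_half_or_induced:
  assumes L: "lord (BS q) R" and q: "q \<ge> 2"
  shows "(\<forall>g\<in>positive_cone (BS q) R. gn g \<ge> 0) \<or> (\<forall>g\<in>positive_cone (BS q) R. gn g \<le> 0)
         \<or> induced_by_affine_action q R"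
proof -
  interpret lord "BS q" R by fact
  have q0: "q \<noteq> 0" and qp: "q > 0" using q by simp_all
  have "bB q \<noteq> \<one>\<^bsub>BS q\<^esub>" using q0 by (metis gr_B gr_one zero_neq_one)
  hence "R \<one>\<^bsub>BS q\<^esub> (bB q) \<or> R (bB q) \<one>\<^bsub>BS q\<^esub>" using R_total[of "\<one>\<^bsub>BS q\<^esub>" "bB q"] by auto
  thus ?thesis
  proof
    assume B: "R \<one>\<^bsub>BS q\<^esub> (bB q)"
    from classify[OF L q B] show ?thesis
    proof (elim disjE)
      assume a: "\<forall>g\<in>carrier (BS q). gn g > 0 \<longrightarrow> R g \<one>\<^bsub>BS q\<^esub>"
      have "gn g \<le> 0" if "g \<in> positive_cone (BS q) R" for g
        using that a R_asym by (force simp: positive_cone_def)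
      thus ?thesis by blast
    next
      assume a: "\<forall>g\<in>carrier (BS q). gn g > 0 \<longrightarrow> R \<one>\<^bsub>BS q\<^esub> g"
      have "gn g \<ge> 0" if "g \<in> positive_cone (BS q) R" for g
      proof (rule ccontr)
        assume "\<not> gn g \<ge> 0"
        have gC: "g \<in> carrier (BS q)" "R \<one>\<^bsub>BS q\<^esub> g" using that by (auto simp: positive_cone_def)
        hence "R \<one>\<^bsub>BS q\<^esub> (inv\<^bsub>BS q\<^esub> g)" using a \<open>\<not> gn g \<ge> 0\<close> by (simp add: gn_inv)
        thus False using pos_inv_not gC by blast
      qed
      thus ?thesis by blast
    next
      assume "\<exists>x. \<forall>g\<in>carrier (BS q). aff q g x \<noteq> x \<longrightarrow> (R \<one>\<^bsub>BS q\<^esub> g \<longleftrightarrow> aff q g x > x)"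
      thus ?thesis unfolding induced_by_affine_action_def using bs_act_aff[OF q0] by auto
    qed
  next
    assume B: "R (bB q) \<one>\<^bsub>BS q\<^esub>"
    have L': "lord (BS q) (\<lambda>x y. R y x)" by (rule converse_lord)
    have cl: "(\<forall>g\<in>carrier (BS q). gn g > 0 \<longrightarrow> R \<one>\<^bsub>BS q\<^esub> g) \<or>
         (\<forall>g\<in>carrier (BS q). gn g > 0 \<longrightarrow> R g \<one>\<^bsub>BS q\<^esub>) \<or>
         (\<exists>x. \<forall>g\<in>carrier (BS q). aff q g x \<noteq> x \<longrightarrow> (R g \<one>\<^bsub>BS q\<^esub> \<longleftrightarrow> aff q g x > x))"
      using classify[OF L' q] B by simp
    from cl show ?thesis
    proof (elim disjE)
      assume a: "\<forall>g\<in>carrier (BS q). gn g > 0 \<longrightarrow> R \<one>\<^bsub>BS q\<^esub> g"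
      have "gn g \<ge> 0" if "g \<in> positive_cone (BS q) R" for g
      proof (rule ccontr)
        assume "\<not> gn g \<ge> 0"
        have gC: "g \<in> carrier (BS q)" "R \<one>\<^bsub>BS q\<^esub> g" using that by (auto simp: positive_cone_def)
        hence "R \<one>\<^bsub>BS q\<^esub> (inv\<^bsub>BS q\<^esub> g)" using a \<open>\<not> gn g \<ge> 0\<close> by (simp add: gn_inv)
        thus False using pos_inv_not gC by blast
      qed
      thus ?thesis by blast
    next
      assume a: "\<forall>g\<in>carrier (BS q). gn g > 0 \<longrightarrow> R g \<one>\<^bsub>BS q\<^esub>"
      have "gn g \<le> 0" if "g \<in> positive_cone (BS q) R" for g
        using that a R_asym by (force simp: positive_cone_def)
      thus ?thesis by blast
    next
      assume "\<exists>x. \<forall>g\<in>carrier (BS q). aff q g x \<noteq> x \<longrightarrow> (R g \<one>\<^bsub>BS q\<^esub> \<longleftrightarrow> aff q g x > x)"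
      then obtain x where x: "\<forall>g\<in>carrier (BS q). aff q g x \<noteq> x \<longrightarrow> (R g \<one>\<^bsub>BS q\<^esub> \<longleftrightarrow> aff q g x > x)" by blast
      have "R \<one>\<^bsub>BS q\<^esub> g \<longleftrightarrow> aff q g x < x" if g: "g \<in> carrier (BS q)" "aff q g x \<noteq> x" for g
      proof -
        have igC: "inv\<^bsub>BS q\<^esub> g \<in> carrier (BS q)" using g by simp
        have "aff q (inv\<^bsub>BS q\<^esub> g) x \<noteq> x"
        proof
          assume "aff q (inv\<^bsub>BS q\<^esub> g) x = x"
          thus False using aff_inv_cancel(2)[OF q0 g(1), of x] g(2) by simp
        qed
        hence "R (inv\<^bsub>BS q\<^esub> g) \<one>\<^bsub>BS q\<^esub> \<longleftrightarrow> aff q (inv\<^bsub>BS q\<^esub> g) x > x" using x igC by blast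
        moreover have "R (inv\<^bsub>BS q\<^esub> g) \<one>\<^bsub>BS q\<^esub> \<longleftrightarrow> R \<one>\<^bsub>BS q\<^esub> g" using neg_iff[OF igC] g by simp
        ultimately show ?thesis using aff_inv_gt[OF qp g(1)] by simp
      qed
      hence "\<forall>g\<in>carrier (BS q). bs_act q g x \<noteq> x \<longrightarrow> (R \<one>\<^bsub>BS q\<^esub> g \<longleftrightarrow> bs_act q g x < x)"
        by (simp add: bs_act_aff[OF q0])
      thus ?thesis unfolding induced_by_affine_action_def by blast
    qed
  qed
qed


section \<open>Pumping\<close>

lemma nfa_run_append: "nfa_run D p u s \<Longrightarrow> nfa_run D s v r \<Longrightarrow> nfa_run D p (u @ v) r"
  by (induction rule: nfa_run.induct) (auto intro: nfa_run.intros)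

lemma nfa_run_states:
  "nfa_run D p w r \<Longrightarrow> \<exists>ss. length ss = Suc (length w) \<and> ss ! 0 = p \<and> ss ! length w = r \<and>
     (\<forall>i<length w. (ss ! i, w ! i, ss ! Suc i) \<in> D)"
proof (induction rule: nfa_run.induct)
  case (nfa_nil p) thus ?case by (intro exI[of _ "[p]"]) simp
next
  case (nfa_step p x p' w r)
  then obtain ss where ss: "length ss = Suc (length w)" "ss ! 0 = p'" "ss ! length w = r"
     "\<forall>i<length w. (ss ! i, w ! i, ss ! Suc i) \<in> D" by blast
  have "\<forall>i<length (x # w). ((p # ss) ! i, (x # w) ! i, (p # ss) ! Suc i) \<in> D"
  proof (intro allI impI)
    fix i assume "i < length (x # w)"
    thus "((p # ss) ! i, (x # w) ! i, (p # ss) ! Suc i) \<in> D"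
      using ss nfa_step.hyps(1) by (cases i) auto
  qed
  thus ?case using ss by (intro exI[of _ "p # ss"]) simp
qed

lemma nfa_run_seg:
  assumes st: "\<forall>i<length w. (ss ! i, w ! i, ss ! Suc i) \<in> D"
  shows "i \<le> j \<Longrightarrow> j \<le> length w \<Longrightarrow> nfa_run D (ss ! i) (drop i (take j w)) (ss ! j)"
proof (induction j)
  case 0 thus ?case by (simp add: nfa_run.nfa_nil)
next
  case (Suc j)
  show ?case
  proof (cases "i = Suc j")
    case True thus ?thesis by (simp add: nfa_run.nfa_nil)
  next
    case False
    hence ij: "i \<le> j" "j < length w" using Suc by auto
    have r1: "nfa_run D (ss ! i) (drop i (take j w)) (ss ! j)" using Suc ij by simp
    have r2: "nfa_run D (ss ! j) [w ! j] (ss ! Suc j)" using st ij by (auto intro: nfa_run.intros)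
    have "drop i (take (Suc j) w) = drop i (take j w) @ [w ! j]"
      using ij by (simp add: take_Suc_conv_app_nth)
    thus ?thesis using nfa_run_append[OF r1 r2] by simp
  qed
qed

definition int_at :: "int \<Rightarrow> nat \<Rightarrow> real \<Rightarrow> bool" where
  "int_at q K r \<longleftrightarrow> (\<exists>z::int. of_int q ^ K * r = of_int z)"

lemma int_at_mono: "int_at q K r \<Longrightarrow> K \<le> K' \<Longrightarrow> int_at q K' r"
proof -
  assume "int_at q K r" "K \<le> K'"
  then obtain z where z: "of_int q ^ K * r = of_int z" by (auto simp: int_at_def)
  have "(of_int q :: real) ^ K' * r = of_int q ^ (K' - K) * (of_int q ^ K * r)"
    using \<open>K \<le> K'\<close> by (simp add: power_add[symmetric])
  also have "\<dots> = of_int (q ^ (K' - K) * z)" by (simp add: z)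
  finally show ?thesis unfolding int_at_def by blast
qed

lemma int_at_add: "int_at q K r \<Longrightarrow> int_at q K r' \<Longrightarrow> int_at q K (r + r')"
  unfolding int_at_def by (auto simp: distrib_left) (metis of_int_add)

lemma int_at_zero: "int_at q K 0" by (auto simp: int_at_def intro: exI[of _ 0])


locale pump =
  fixes q :: int and R and X :: "nat set" and \<pi> :: "nat list \<Rightarrow> gen list set" and Lg
    and Q :: "nat set" and I F and D :: "(nat \<times> nat \<times> nat) set"
  assumes q2: "\<bar>q\<bar> \<ge> 2"
    and L: "lord (BS q) R"
    and finX: "finite X"
    and pi_nil: "\<pi> [] = \<one>\<^bsub>BS q\<^esub>"
    and pi_hom: "\<forall>u\<in>lists X. \<forall>v\<in>lists X. \<pi> (u @ v) = \<pi> u \<otimes>\<^bsub>BS q\<^esub> \<pi> v"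
    and pi_surj: "\<pi> ` lists X = carrier (BS q)"
    and finQ: "finite Q" and IQ: "I \<subseteq> Q" and FQ: "F \<subseteq> Q" and DQ: "D \<subseteq> Q \<times> X \<times> Q"
    and Lg_def: "Lg = {w \<in> lists X. \<exists>p\<in>I. \<exists>r\<in>F. nfa_run D p w r}"
    and pi_L: "\<pi> ` Lg = positive_cone (BS q) R"
begin

lemma q0: "q \<noteq> 0" using q2 by auto

lemma piC: "w \<in> lists X \<Longrightarrow> \<pi> w \<in> carrier (BS q)" using pi_surj by blast

lemma gn_app: "u \<in> lists X \<Longrightarrow> v \<in> lists X \<Longrightarrow> gn (\<pi> (u @ v)) = gn (\<pi> u) + gn (\<pi> v)"
  using pi_hom piC by (simp add: gn_mult)

lemma gr_cons: "x \<in> X \<Longrightarrow> w \<in> lists X \<Longrightarrow>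
   gr q (\<pi> (x # w)) = gr q (\<pi> [x]) + of_int q powi gn (\<pi> [x]) * gr q (\<pi> w)"
proof -
  assume x: "x \<in> X" and w: "w \<in> lists X"
  have "\<pi> (x # w) = \<pi> [x] \<otimes>\<^bsub>BS q\<^esub> \<pi> w" using pi_hom x w by (metis append_Cons append_Nil in_listsI empty_iff list.set(1) set_ConsD)
  thus ?thesis using gr_mult[OF q0 piC piC] x w by simp
qed

definition nx :: "nat \<Rightarrow> int" where "nx x = gn (\<pi> [x])"
definition s :: nat where "s = (\<Sum>x\<in>X. nat \<bar>nx x\<bar>) + 1"

lemma s_bound: "x \<in> X \<Longrightarrow> \<bar>nx x\<bar> < int s"
proof -
  assume x: "x \<in> X"
  define S where "S = (\<Sum>x\<in>X. nat \<bar>nx x\<bar>)"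
  have "nat \<bar>nx x\<bar> \<le> S" unfolding S_def by (intro member_le_sum) (simp_all add: finX x)
  hence a: "int (nat \<bar>nx x\<bar>) \<le> int S" by (simp only: of_nat_le_iff)
  have b: "int s = int S + 1" by (simp only: s_def S_def of_nat_add of_nat_1)
  have c: "int (nat \<bar>nx x\<bar>) = \<bar>nx x\<bar>" by simp
  show ?thesis using a b c by linarith
qed

lemma s_pos: "s \<ge> 1" by (simp add: s_def)

definition ex :: "nat \<Rightarrow> nat" where "ex x = (SOME e. int_at q e (gr q (\<pi> [x])))"
definition e :: nat where "e = (\<Sum>x\<in>X. ex x)"

lemma ex_ok: "x \<in> X \<Longrightarrow> int_at q (ex x) (gr q (\<pi> [x]))"
proof -
  assume x: "x \<in> X"
  obtain m k where mk: "gr q (\<pi> [x]) = of_int k * of_int q powi (- int m)"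
    using gr_form[OF q0 piC[of "[x]"]] x by auto
  have "(of_int q :: real) ^ m * (of_int k * of_int q powi (- int m)) = of_int k"
    using q0 by (simp add: power_int_minus)
  hence "int_at q m (gr q (\<pi> [x]))" unfolding int_at_def mk by blast
  thus ?thesis unfolding ex_def by (rule someI)
qed

lemma e_ok: "x \<in> X \<Longrightarrow> int_at q e (gr q (\<pi> [x]))"
proof -
  assume x: "x \<in> X"
  have "ex x \<le> e" unfolding e_def by (intro member_le_sum) (simp_all add: finX x)
  thus ?thesis using ex_ok[OF x] int_at_mono by blast
qed

lemma int_bound:
  "w \<in> lists X \<Longrightarrow> (\<forall>i\<le>length w. gn (\<pi> (take i w)) \<ge> - int K) \<Longrightarrow> int_at q (e + K) (gr q (\<pi> w))"
proof (induction w arbitrary: K)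
  case Nil thus ?case using int_at_zero by (simp add: pi_nil q0)
next
  case (Cons x w)
  have x: "x \<in> X" and w: "w \<in> lists X" using Cons.prems by auto
  have "gn (\<pi> (take 1 (x # w))) \<ge> - int K" using Cons.prems(2) by (metis le_add1 length_Cons plus_1_eq_Suc)
  hence nxK: "nx x \<ge> - int K" by (simp add: nx_def)
  define K' where "K' = nat (int K + nx x)"
  have K': "int K' = int K + nx x" using nxK by (simp add: K'_def)
  have "\<forall>i\<le>length w. gn (\<pi> (take i w)) \<ge> - int K'"
  proof (intro allI impI)
    fix i assume i: "i \<le> length w"
    have "gn (\<pi> (take (Suc i) (x # w))) \<ge> - int K" using Cons.prems(2) i by (simp del: take_Suc_Cons)
    moreover have "take (Suc i) (x # w) = [x] @ take i w" by simp
    moreover have "take i w \<in> lists X" using w by (meson in_listsD in_listsI in_set_takeD)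
    ultimately have "nx x + gn (\<pi> (take i w)) \<ge> - int K" using gn_app[of "[x]" "take i w"] x
      by (simp add: nx_def)
    thus "gn (\<pi> (take i w)) \<ge> - int K'" using K' by simp
  qed
  hence IH: "int_at q (e + K') (gr q (\<pi> w))" using Cons.IH w by blast
  have qr: "(of_int q :: real) \<noteq> 0" using q0 by simp
  have pw: "(of_int q :: real) ^ (e + K) * of_int q powi nx x = of_int q ^ (e + K')"
  proof -
    have "(of_int q :: real) ^ (e + K) * of_int q powi nx x = of_int q powi (int (e + K) + nx x)"
      using qr by (simp add: power_int_add power_add)
    also have "int (e + K) + nx x = int (e + K')" using K' by simp
    also have "(of_int q :: real) powi int (e + K') = of_int q ^ (e + K')" by (rule power_int_of_nat)
    finally show ?thesis .
  qed
  have t1: "int_at q (e + K) (gr q (\<pi> [x]))" using e_ok[OF x] int_at_mono by simp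
  have t2: "int_at q (e + K) (of_int q powi gn (\<pi> [x]) * gr q (\<pi> w))"
  proof -
    obtain z where "of_int q ^ (e + K') * gr q (\<pi> w) = of_int z" using IH by (auto simp: int_at_def)
    hence "of_int q ^ (e + K) * (of_int q powi gn (\<pi> [x]) * gr q (\<pi> w)) = of_int z"
      using pw by (simp add: nx_def mult.assoc[symmetric])
    thus ?thesis by (auto simp: int_at_def)
  qed
  show ?case using int_at_add[OF t1 t2] gr_cons[OF x w] by simp
qed

end


context pump
begin

lemma no_half:
  assumes half: "(\<forall>g\<in>positive_cone (BS q) R. gn g \<ge> 0) \<or> (\<forall>g\<in>positive_cone (BS q) R. gn g \<le> 0)"
  shows False
proof -
  interpret lord "BS q" R by (rule L)
  define k where "k = card Q"
  define H where "H = (k + 1) * s"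
  define M where "M = e + H + 1"
  define c where "c = nf q M 1 M"
  have cC: "c \<in> carrier (BS q)" by (simp add: c_def nf_nfw)
  have gnc: "gn c = 0" by (simp add: c_def)
  have grc: "gr q c = of_int q powi (- int M)" using q0 by (simp add: c_def)
  have "c \<noteq> \<one>\<^bsub>BS q\<^esub>" using grc q0 by auto
  hence "R \<one>\<^bsub>BS q\<^esub> c \<or> R \<one>\<^bsub>BS q\<^esub> (inv\<^bsub>BS q\<^esub> c)" using pos_or_inv cC by blast
  then obtain t where t: "t \<in> positive_cone (BS q) R" "gn t = 0"
    "gr q t = of_int q powi (- int M) \<or> gr q t = - (of_int q powi (- int M))"
  proof
    assume "R \<one>\<^bsub>BS q\<^esub> c" thus ?thesis using that[of c] cC gnc grc by (simp add: positive_cone_def)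
  next
    assume "R \<one>\<^bsub>BS q\<^esub> (inv\<^bsub>BS q\<^esub> c)"
    thus ?thesis using that[of "inv\<^bsub>BS q\<^esub> c"] cC gnc grc q0 by (simp add: positive_cone_def gn_inv gr_inv)
  qed
  obtain w where w: "w \<in> Lg" "\<pi> w = t" using t(1) pi_L by (metis imageE)
  obtain p r where wX: "w \<in> lists X" and pr: "p \<in> I" "r \<in> F" "nfa_run D p w r"
    using w(1) Lg_def by blast
  define h where "h i = gn (\<pi> (take i w))" for i
  have takeX: "take i w \<in> lists X" for i using wX by (meson in_listsD in_listsI in_set_takeD)
  have dropX: "drop i w \<in> lists X" for i using wX by (meson in_listsD in_listsI in_set_dropD)
  have deep: "\<exists>i\<le>length w. h i < - int H"
  proof (rule ccontr)
    assume "\<not> (\<exists>i\<le>length w. h i < - int H)"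
    hence "\<forall>i\<le>length w. gn (\<pi> (take i w)) \<ge> - int H" by (auto simp: h_def not_less)
    hence "int_at q (e + H) (gr q t)" using int_bound[OF wX] w(2) by simp
    then obtain z where z: "of_int q ^ (e + H) * gr q t = of_int z" by (auto simp: int_at_def)
    have qr: "(of_int q :: real) \<noteq> 0" using q0 by simp
    have "(of_int q :: real) ^ (e + H) * of_int q powi (- int M) = inverse (of_int q)"
    proof -
      have "(of_int q :: real) powi (- int M) = inverse (of_int q ^ M)" by (simp add: power_int_minus)
      moreover have "(of_int q :: real) ^ M = of_int q ^ (e + H) * of_int q" by (simp add: M_def)
      ultimately show ?thesis using qr by (simp add: field_simps)
    qed
    hence "of_int z = inverse (of_int q :: real) \<or> of_int z = - inverse (of_int q :: real)" using z t(3) by auto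
    hence "of_int z * of_int q = (1::real) \<or> of_int z * of_int q = (-1::real)" using qr by auto
    hence zq: "z * q = 1 \<or> z * q = -1" by (metis of_int_1 of_int_eq_iff of_int_minus of_int_mult)
    hence "\<bar>z\<bar> * \<bar>q\<bar> = 1" by (auto simp: abs_mult[symmetric])
    moreover have "\<bar>z\<bar> * \<bar>q\<bar> \<noteq> 1"
    proof (cases "z = 0")
      case False
      hence "\<bar>z\<bar> \<ge> 1" by simp
      hence "\<bar>z\<bar> * \<bar>q\<bar> \<ge> 1 * 2" using q2 by (intro mult_mono) simp_all
      thus ?thesis by simp
    qed simp
    ultimately show False by simp
  qed
  obtain ss where ss: "length ss = Suc (length w)" "ss ! 0 = p" "ss ! length w = r"
     "\<forall>i<length w. (ss ! i, w ! i, ss ! Suc i) \<in> D" using nfa_run_states[OF pr(3)] by blast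
  have ssQ: "ss ! i \<in> Q" if "i \<le> length w" for i
  proof (cases "i < length w")
    case True thus ?thesis using ss(4) DQ by blast
  next
    case False thus ?thesis using that ss(3) pr(2) FQ by auto
  qed
  have h0: "h 0 = 0" by (simp add: h_def pi_nil)
  have hstep: "\<bar>h (Suc i) - h i\<bar> < int s" if "i < length w" for i
  proof -
    have "take (Suc i) w = take i w @ [w ! i]" using that by (simp add: take_Suc_conv_app_nth)
    moreover have wi: "w ! i \<in> X" using wX that by (meson in_listsD nth_mem)
    ultimately have "h (Suc i) = h i + nx (w ! i)" using gn_app[OF takeX, of "[w ! i]" i]
      by (simp add: h_def nx_def)
    thus ?thesis using s_bound[OF wi] by simp
  qed
  define P where "P j i \<longleftrightarrow> i \<le> length w \<and> h i \<le> - (int j * int s)" for j i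
  define tt where "tt j = (LEAST i. P j i)" for j
  have ttP: "P j (tt j)" if "j \<le> k" for j
  proof -
    obtain i0 where i0: "i0 \<le> length w" "h i0 < - int H" using deep by blast
    have "j * s \<le> H" using that unfolding H_def by (intro mult_right_mono) simp_all
    hence "int j * int s \<le> int H" by (metis of_nat_le_iff of_nat_mult)
    hence "P j i0" using i0 by (simp add: P_def)
    thus ?thesis unfolding tt_def by (rule LeastI)
  qed
  have ttlow: "h (tt j) > - ((int j + 1) * int s)" if "j \<le> k" for j
  proof (cases "tt j = 0")
    case True
    have "(int j + 1) * int s > 0" using s_pos by (intro mult_pos_pos) simp_all
    thus ?thesis using True h0 by simp
  next
    case False
    define i' where "i' = tt j - 1"
    have i'l: "i' < tt j" using False by (simp add: i'_def)
    hence "\<not> P j i'" unfolding tt_def by (rule not_less_Least)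
    moreover have "i' \<le> length w" using ttP[OF that] i'l by (simp add: P_def)
    ultimately have a: "h i' > - (int j * int s)" by (simp add: P_def)
    have "Suc i' = tt j" using False by (simp add: i'_def)
    moreover have "i' < length w" using ttP[OF that] i'l by (simp add: P_def)
    ultimately have "\<bar>h (tt j) - h i'\<bar> < int s" using hstep by metis
    thus ?thesis using a by (simp add: algebra_simps)
  qed
  define f where "f j = ss ! tt j" for j
  have fQ: "f ` {0..k} \<subseteq> Q" using ttP ssQ by (auto simp: f_def P_def)
  have "\<not> inj_on f {0..k}"
  proof
    assume "inj_on f {0..k}"
    hence "card {0..k} \<le> card Q" using card_inj_on_le[OF _ fQ finQ] by blast
    thus False by (simp add: k_def)
  qed
  then obtain j1 j2 where j12: "j1 \<in> {0..k}" "j2 \<in> {0..k}" "j1 \<noteq> j2" "f j1 = f j2"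
    unfolding inj_on_def by blast
  obtain a b where ab: "a < b" "b \<le> k" "f a = f b"
  proof (cases "j1 < j2")
    case True thus ?thesis using that[of j1 j2] j12 by auto
  next
    case False thus ?thesis using that[of j2 j1] j12 by auto
  qed
  define i1 where "i1 = tt a"
  define i2 where "i2 = tt b"
  have Pa: "P a i1" using ttP ab by (simp add: i1_def)
  have Pb: "P b i2" using ttP ab by (simp add: i2_def)
  have h1: "h i1 > - ((int a + 1) * int s)" using ttlow ab by (simp add: i1_def)
  have "int a + 1 \<le> int b" using ab by simp
  hence "(int a + 1) * int s \<le> int b * int s" by (simp add: mult_right_mono)
  hence hlt: "h i2 < h i1" using Pb h1 by (simp add: P_def)
  have "int a * int s \<le> int b * int s" using ab by (simp add: mult_right_mono)
  hence "P a i2" using Pb by (simp add: P_def)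
  hence "i1 \<le> i2" unfolding i1_def tt_def by (rule Least_le)
  hence i12: "i1 < i2" using hlt by (cases "i1 = i2") auto
  have i2l: "i2 \<le> length w" using Pb by (simp add: P_def)
  have same: "ss ! i1 = ss ! i2" using ab by (simp add: f_def i1_def i2_def)
  define u where "u = take i1 w"
  define v where "v = drop i1 (take i2 w)"
  define z where "z = drop i2 w"
  have ru: "nfa_run D p u (ss ! i1)" using nfa_run_seg[OF ss(4), of 0 i1] i12 i2l ss(2) by (simp add: u_def)
  have rv: "nfa_run D (ss ! i1) v (ss ! i1)" using nfa_run_seg[OF ss(4), of i1 i2] i12 i2l same by (simp add: v_def)
  have rz: "nfa_run D (ss ! i1) z r" using nfa_run_seg[OF ss(4), of i2 "length w"] i2l same ss(3) by (simp add: z_def)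
  have uX: "u \<in> lists X" by (simp add: u_def takeX)
  have vX: "v \<in> lists X" using takeX[of i2] by (simp add: v_def) (meson in_listsD in_listsI in_set_dropD)
  have zX: "z \<in> lists X" by (simp add: z_def dropX)
  have tw: "take i2 w = u @ v" using i12 by (simp add: u_def v_def) (metis append_take_drop_id min.absorb1 less_imp_le take_take)
  have ww: "w = u @ v @ z" using tw by (metis append.assoc append_take_drop_id z_def)
  have gnv: "gn (\<pi> v) = h i2 - h i1" using gn_app[OF uX vX] tw by (simp add: h_def u_def)
  have gnw: "gn (\<pi> u) + gn (\<pi> v) + gn (\<pi> z) = 0"
    using gn_app[OF uX, of "v @ z"] gn_app[OF vX zX] ww w(2) t(2) vX zX by simp
  define w1 where "w1 = u @ v @ v @ z"
  define w2 where "w2 = u @ z"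
  have w1L: "w1 \<in> Lg"
  proof -
    have "nfa_run D p w1 r" unfolding w1_def using ru rv rz by (blast intro: nfa_run_append)
    moreover have "w1 \<in> lists X" using uX vX zX by (simp add: w1_def)
    ultimately show ?thesis using pr Lg_def by blast
  qed
  have w2L: "w2 \<in> Lg"
  proof -
    have "nfa_run D p w2 r" unfolding w2_def using ru rz by (blast intro: nfa_run_append)
    moreover have "w2 \<in> lists X" using uX zX by (simp add: w2_def)
    ultimately show ?thesis using pr Lg_def by blast
  qed
  have g1: "gn (\<pi> w1) = gn (\<pi> v)"
  proof -
    have "gn (\<pi> w1) = gn (\<pi> u) + (gn (\<pi> v) + (gn (\<pi> v) + gn (\<pi> z)))"
      unfolding w1_def using uX vX zX by (simp add: gn_app)
    thus ?thesis using gnw by simp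
  qed
  have g2: "gn (\<pi> w2) = - gn (\<pi> v)"
    unfolding w2_def using gn_app[OF uX zX] gnw by simp
  have P1: "\<pi> w1 \<in> positive_cone (BS q) R" using w1L pi_L by blast
  have P2: "\<pi> w2 \<in> positive_cone (BS q) R" using w2L pi_L by blast
  show False using half P1 P2 g1 g2 gnv hlt by force
qed

end


lemma no_regular_half:
  assumes q2: "\<bar>q\<bar> \<ge> 2" and C: "C_left_order regular_lang (BS q) R"
    and half: "(\<forall>g\<in>positive_cone (BS q) R. gn g \<ge> 0) \<or> (\<forall>g\<in>positive_cone (BS q) R. gn g \<le> 0)"
  shows False
proof -
  from C have lo: "left_order (BS q) R" by (simp add: C_left_order_def)
  from C have "\<exists>X \<pi> Lg. finite X \<and> \<pi> [] = \<one>\<^bsub>BS q\<^esub> \<and>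
    (\<forall>u\<in>lists X. \<forall>v\<in>lists X. \<pi> (u @ v) = \<pi> u \<otimes>\<^bsub>BS q\<^esub> \<pi> v) \<and>
    \<pi> ` lists X = carrier (BS q) \<and> Lg \<subseteq> lists X \<and> regular_lang X Lg \<and> \<pi> ` Lg = positive_cone (BS q) R"
    unfolding C_left_order_def by (rule conjunct2)
  then obtain X \<pi> Lg where X: "finite X" "\<pi> [] = \<one>\<^bsub>BS q\<^esub>"
    "\<forall>u\<in>lists X. \<forall>v\<in>lists X. \<pi> (u @ v) = \<pi> u \<otimes>\<^bsub>BS q\<^esub> \<pi> v"
    "\<pi> ` lists X = carrier (BS q)" "Lg \<subseteq> lists X" "regular_lang X Lg" "\<pi> ` Lg = positive_cone (BS q) R"
    by (elim exE conjE)
  from X(6) have "\<exists>Q I F D. finite Q \<and> I \<subseteq> Q \<and> F \<subseteq> Q \<and> D \<subseteq> Q \<times> X \<times> Q \<and>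
    Lg = {w \<in> lists X. \<exists>p\<in>I. \<exists>r\<in>F. nfa_run D p w r}" unfolding regular_lang_def .
  then obtain Q I F D where QIFD: "finite Q" "I \<subseteq> Q" "F \<subseteq> Q" "D \<subseteq> Q \<times> X \<times> Q"
    "Lg = {w \<in> lists X. \<exists>p\<in>I. \<exists>r\<in>F. nfa_run D p w r}" by (elim exE conjE)
  interpret pump q R X \<pi> Lg Q I F D
    by (rule pump.intro[OF q2 lordI[OF lo] X(1) X(2) X(3) X(4) QIFD(1) QIFD(2) QIFD(3) QIFD(4) QIFD(5) X(7)])
  show False using no_half[OF half] .
qed

lemma no_regular_neg:
  assumes q: "q \<le> -2" shows "\<not> admits_C_left_order regular_lang (BS q)"
proof
  assume "admits_C_left_order regular_lang (BS q)"
  then obtain R where C: "C_left_order regular_lang (BS q) R" by (auto simp: admits_C_left_order_def)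
  hence "lord (BS q) R" by (intro lordI) (simp add: C_left_order_def)
  from neg_half[OF this] q have half: "(\<forall>g\<in>positive_cone (BS q) R. gn g \<ge> 0) \<or> (\<forall>g\<in>positive_cone (BS q) R. gn g \<le> 0)"
    by simp
  show False using no_regular_half[OF _ C half] q by simp
qed

lemma regular_induced:
  assumes q: "q \<ge> 2" and C: "C_left_order regular_lang (BS q) R"
  shows "induced_by_affine_action q R"
proof -
  have "lord (BS q) R" using C by (intro lordI) (simp add: C_left_order_def)
  from pos_half_or_induced[OF this q] show ?thesis
  proof (elim disjE)
    assume "\<forall>g\<in>positive_cone (BS q) R. gn g \<ge> 0"
    thus ?thesis using no_regular_half[OF _ C] q by simp
  next
    assume "\<forall>g\<in>positive_cone (BS q) R. gn g \<le> 0"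
    thus ?thesis using no_regular_half[OF _ C] q by simp
  qed
qed

section \<open>Constructions\<close>

definition dec :: "nat \<Rightarrow> gen" where
  "dec n = (if n = 0 then Ga else if n = 1 then Gai else if n = 2 then Gb else Gbi)"

fun enc :: "gen \<Rightarrow> nat" where
  "enc Ga = 0" | "enc Gai = 1" | "enc Gb = 2" | "enc Gbi = 3"

lemma dec_enc: "dec (enc c) = c" by (cases c) (simp_all add: dec_def)

definition XX :: "nat set" where "XX = {0, 1, 2, 3}"

definition piX :: "int \<Rightarrow> nat list \<Rightarrow> gen list set" where "piX q w = bs_class q (map dec w)"

lemma enc_X: "map enc u \<in> lists XX"
proof -
  have "enc c \<in> XX" for c by (cases c) (simp_all add: XX_def)
  thus ?thesis by auto
qed

lemma pi_surj: "piX q ` lists XX = carrier (BS q)"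
proof
  show "piX q ` lists XX \<subseteq> carrier (BS q)" by (auto simp: piX_def)
next
  show "carrier (BS q) \<subseteq> piX q ` lists XX"
  proof
    fix g assume "g \<in> carrier (BS q)"
    then obtain u where u: "g = bs_class q u" by (auto simp: BS_carrier)
    have "map dec (map enc u) = u" by (induction u) (simp_all add: dec_enc)
    hence "piX q (map enc u) = g" by (simp add: piX_def u)
    thus "g \<in> piX q ` lists XX" using enc_X by (metis imageI)
  qed
qed

definition cone_ok :: "int \<Rightarrow> gen list set set \<Rightarrow> bool" where
  "cone_ok q P \<longleftrightarrow> P \<subseteq> carrier (BS q) \<and> \<one>\<^bsub>BS q\<^esub> \<notin> P \<and>
     (\<forall>g\<in>P. \<forall>h\<in>P. g \<otimes>\<^bsub>BS q\<^esub> h \<in> P) \<and>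
     (\<forall>g\<in>carrier (BS q). g \<noteq> \<one>\<^bsub>BS q\<^esub> \<longrightarrow> g \<in> P \<or> inv\<^bsub>BS q\<^esub> g \<in> P)"

lemma build_C:
  assumes cone: "cone_ok q P" and LX: "Lg \<subseteq> lists XX" and CL: "C XX Lg" and img: "piX q ` Lg = P"
  shows "admits_C_left_order C (BS q)"
proof -
  have P: "P \<subseteq> carrier (BS q)" "\<one>\<^bsub>BS q\<^esub> \<notin> P" "\<And>g h. g \<in> P \<Longrightarrow> h \<in> P \<Longrightarrow> g \<otimes>\<^bsub>BS q\<^esub> h \<in> P"
    "\<And>g. g \<in> carrier (BS q) \<Longrightarrow> g \<noteq> \<one>\<^bsub>BS q\<^esub> \<Longrightarrow> g \<in> P \<or> inv\<^bsub>BS q\<^esub> g \<in> P"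
    using cone by (auto simp: cone_ok_def)
  note co = cone_left_order[OF group_BS P(1) P(2) P(3) P(4)]
  have "C_left_order C (BS q) (cone_rel (BS q) P)"
    unfolding C_left_order_def
  proof (intro conjI exI[of _ XX] exI[of _ "piX q"] exI[of _ Lg])
    show "left_order (BS q) (cone_rel (BS q) P)" by (rule co(1))
    show "finite XX" by (simp add: XX_def)
    show "piX q [] = \<one>\<^bsub>BS q\<^esub>" by (simp add: piX_def BS_one)
    show "\<forall>u\<in>lists XX. \<forall>v\<in>lists XX. piX q (u @ v) = piX q u \<otimes>\<^bsub>BS q\<^esub> piX q v"
      by (simp add: piX_def BS_mult)
    show "piX q ` lists XX = carrier (BS q)" by (rule pi_surj)
    show "Lg \<subseteq> lists XX" by fact
    show "C XX Lg" by fact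
    show "piX q ` Lg = positive_cone (BS q) (cone_rel (BS q) P)" using co(2) img by simp
  qed
  thus ?thesis by (auto simp: admits_C_left_order_def)
qed

definition Plex :: "int \<Rightarrow> gen list set set" where
  "Plex q = {g \<in> carrier (BS q). gn g > 0 \<or> (gn g = 0 \<and> gr q g > 0)}"

definition Ppos :: "int \<Rightarrow> gen list set set" where
  "Ppos q = {g \<in> carrier (BS q). gr q g > 0 \<or> (gr q g = 0 \<and> gn g > 0)}"

definition P0 :: "gen list set set" where
  "P0 = {g \<in> carrier (BS 0). gn g > 0}"

lemma cone_Plex: "q \<noteq> 0 \<Longrightarrow> cone_ok q (Plex q)"
proof -
  assume q: "q \<noteq> 0"
  interpret G: group "BS q" by (rule group_BS)
  show ?thesis unfolding cone_ok_def
  proof (intro conjI ballI impI)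
    show "Plex q \<subseteq> carrier (BS q)" by (auto simp: Plex_def)
    show "\<one>\<^bsub>BS q\<^esub> \<notin> Plex q" using q by (simp add: Plex_def)
  next
    fix g h assume "g \<in> Plex q" "h \<in> Plex q"
    thus "g \<otimes>\<^bsub>BS q\<^esub> h \<in> Plex q" using q by (auto simp: Plex_def gn_mult gr_mult)
  next
    fix g assume g: "g \<in> carrier (BS q)" "g \<noteq> \<one>\<^bsub>BS q\<^esub>"
    show "g \<in> Plex q \<or> inv\<^bsub>BS q\<^esub> g \<in> Plex q"
    proof (cases "gn g = 0")
      case True
      hence "gr q g \<noteq> 0" using g kernel_trivial[OF q] by blast
      thus ?thesis using g True q by (auto simp: Plex_def gn_inv gr_inv)
    next
      case False thus ?thesis using g by (auto simp: Plex_def gn_inv)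
    qed
  qed
qed

lemma cone_Ppos: "q > 0 \<Longrightarrow> cone_ok q (Ppos q)"
proof -
  assume qp: "q > 0"
  hence q: "q \<noteq> 0" by simp
  interpret G: group "BS q" by (rule group_BS)
  have pw: "(of_int q :: real) powi n > 0" for n using qp by simp
  show ?thesis unfolding cone_ok_def
  proof (intro conjI ballI impI)
    show "Ppos q \<subseteq> carrier (BS q)" by (auto simp: Ppos_def)
    show "\<one>\<^bsub>BS q\<^esub> \<notin> Ppos q" using q by (simp add: Ppos_def)
  next
    fix g h assume g: "g \<in> Ppos q" and h: "h \<in> Ppos q"
    have gh: "gr q (g \<otimes>\<^bsub>BS q\<^esub> h) = gr q g + of_int q powi gn g * gr q h"
      using g h q by (simp add: Ppos_def gr_mult)
    have "gr q g \<ge> 0" "gr q h \<ge> 0" using g h by (auto simp: Ppos_def)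
    hence "of_int q powi gn g * gr q h \<ge> 0" using pw[of "gn g"] by simp
    show "g \<otimes>\<^bsub>BS q\<^esub> h \<in> Ppos q"
    proof (cases "gr q g > 0 \<or> gr q h > 0")
      case True
      hence "gr q (g \<otimes>\<^bsub>BS q\<^esub> h) > 0" using gh \<open>gr q g \<ge> 0\<close> \<open>gr q h \<ge> 0\<close> pw[of "gn g"]
        by (auto intro: add_pos_nonneg add_nonneg_pos mult_pos_pos)
      thus ?thesis using g h by (simp add: Ppos_def)
    next
      case False
      hence "gr q g = 0" "gr q h = 0" "gn g > 0" "gn h > 0" using g h by (auto simp: Ppos_def)
      thus ?thesis using g h gh by (simp add: Ppos_def gn_mult)
    qed
  next
    fix g assume g: "g \<in> carrier (BS q)" "g \<noteq> \<one>\<^bsub>BS q\<^esub>"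
    have gi: "gr q (inv\<^bsub>BS q\<^esub> g) = - (of_int q powi (- gn g)) * gr q g" using gr_inv[OF q g(1)] .
    show "g \<in> Ppos q \<or> inv\<^bsub>BS q\<^esub> g \<in> Ppos q"
    proof (cases "gr q g = 0")
      case True
      hence "gn g \<noteq> 0" using g kernel_trivial[OF q] by blast
      thus ?thesis using g True gi by (auto simp: Ppos_def gn_inv)
    next
      case False
      hence "gr q g > 0 \<or> gr q g < 0" by linarith
      thus ?thesis
      proof
        assume "gr q g > 0" thus ?thesis using g by (simp add: Ppos_def)
      next
        assume "gr q g < 0"
        hence "gr q (inv\<^bsub>BS q\<^esub> g) > 0" unfolding gi using pw[of "- gn g"]
          by (simp add: mult_pos_neg)
        thus ?thesis using g by (simp add: Ppos_def)
      qed
    qed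
  qed
qed

lemma cone_P0: "cone_ok 0 P0"
proof -
  interpret G: group "BS 0" by (rule group_BS)
  show ?thesis unfolding cone_ok_def
  proof (intro conjI ballI impI)
    show "P0 \<subseteq> carrier (BS 0)" by (auto simp: P0_def)
    show "\<one>\<^bsub>BS 0\<^esub> \<notin> P0" by (simp add: P0_def)
  next
    fix g h assume "g \<in> P0" "h \<in> P0"
    thus "g \<otimes>\<^bsub>BS 0\<^esub> h \<in> P0" by (auto simp: P0_def gn_mult)
  next
    fix g assume g: "g \<in> carrier (BS 0)" "g \<noteq> \<one>\<^bsub>BS 0\<^esub>"
    have "gn g \<noteq> 0" using g faithful0[OF g(1), of "\<one>\<^bsub>BS 0\<^esub>"] by auto
    thus "g \<in> P0 \<or> inv\<^bsub>BS 0\<^esub> g \<in> P0" using g by (auto simp: P0_def gn_inv)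
  qed
qed


definition E :: "nat list \<Rightarrow> int" where "E w = expo (map dec w)"
definition V :: "int \<Rightarrow> nat list \<Rightarrow> real" where "V q w = word_act q (map dec w) 0"

lemma E_simps [simp]: "E [] = 0" "E (x # w) = gexp (dec x) + E w"
  by (simp_all add: E_def)
lemma V_simps [simp]: "V q [] = 0" "V q (x # w) = gen_act q (dec x) (V q w)"
  by (simp_all add: V_def)

lemma dec_simps [simp]: "dec 0 = Ga" "dec 1 = Gai" "dec 2 = Gb" "dec 3 = Gbi" "dec (Suc 0) = Gai"
  by (simp_all add: dec_def)

lemma gn_pi [simp]: "gn (piX q w) = E w" by (simp add: piX_def E_def)
lemma gr_pi [simp]: "q \<noteq> 0 \<Longrightarrow> gr q (piX q w) = V q w" by (simp add: piX_def V_def)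
lemma pi_in [simp]: "piX q w \<in> carrier (BS q)" by (simp add: piX_def)

lemma nfa_loop: "(p, x, p) \<in> D \<Longrightarrow> nfa_run D p rest r \<Longrightarrow> nfa_run D p (replicate n x @ rest) r"
  by (induction n) (auto intro: nfa_run.intros)

lemma nfa_sound:
  assumes step: "\<And>p x p' w. (p, x, p') \<in> D \<Longrightarrow> w \<in> S p' \<Longrightarrow> x # w \<in> S p"
    and fin: "\<And>r. r \<in> F \<Longrightarrow> [] \<in> S r"
  shows "nfa_run D p w r \<Longrightarrow> r \<in> F \<Longrightarrow> w \<in> S p"
  by (induction rule: nfa_run.induct) (auto intro: step fin)

lemma map_dec_rep [simp]: "map dec (replicate n x) = replicate n (dec x)" by simp

lemma lists_XX_rep [simp]: "x \<in> XX \<Longrightarrow> replicate n x \<in> lists XX" by auto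

lemma XX_simps [simp]: "0 \<in> XX" "1 \<in> XX" "2 \<in> XX" "3 \<in> XX" "Suc 0 \<in> XX" by (simp_all add: XX_def)

lemma nf_gr_k:
  assumes q: "q \<noteq> 0" shows "gr q (nf q m k m') > 0 \<longleftrightarrow> of_int k * of_int q powi (- int m) > (0::real)"
  using q by simp

definition Dpos :: "(nat \<times> nat \<times> nat) set" where
  "Dpos = {(0,1,0), (0,2,1), (1,2,1), (1,0,2), (2,0,2), (4,0,3), (3,0,3)}"
definition Ipos :: "nat set" where "Ipos = {0, 4}"
definition Fpos :: "nat set" where "Fpos = {1, 2, 3}"
definition Lpos :: "nat list set" where "Lpos = {w \<in> lists XX. \<exists>p\<in>Ipos. \<exists>r\<in>Fpos. nfa_run Dpos p w r}"

lemma reg_Lpos: "regular_lang XX Lpos"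
  unfolding regular_lang_def Lpos_def
  by (rule exI[of _ "{0,1,2,3,4}"], rule exI[of _ Ipos], rule exI[of _ Fpos], rule exI[of _ Dpos])
     (auto simp: Ipos_def Fpos_def Dpos_def XX_def)

definition Spos :: "int \<Rightarrow> nat \<Rightarrow> nat list set" where
  "Spos q p = (if p = 0 then {w. V q w > 0} else if p = 1 \<or> p = 2 then {w. V q w \<ge> 0}
     else if p = 3 then {w. V q w = 0 \<and> E w \<ge> 0} else {w. V q w = 0 \<and> E w > 0})"

lemma Lpos_sound: "q > 0 \<Longrightarrow> w \<in> Lpos \<Longrightarrow> piX q w \<in> Ppos q"
proof -
  assume q: "q > 0" and w: "w \<in> Lpos"
  have step: "x # w \<in> Spos q p" if "(p, x, p') \<in> Dpos" "w \<in> Spos q p'" for p x p' w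
    using that q by (auto simp: Dpos_def Spos_def)
  have fin: "[] \<in> Spos q r" if "r \<in> Fpos" for r using that by (auto simp: Fpos_def Spos_def)
  from w obtain p r where "p \<in> Ipos" "r \<in> Fpos" "nfa_run Dpos p w r" by (auto simp: Lpos_def)
  hence "w \<in> Spos q p" using nfa_sound[of Dpos "Spos q" Fpos] step fin by blast
  thus ?thesis using \<open>p \<in> Ipos\<close> q by (auto simp: Ipos_def Spos_def Ppos_def)
qed

lemma Lpos_complete: "q > 0 \<Longrightarrow> g \<in> Ppos q \<Longrightarrow> g \<in> piX q ` Lpos"
proof -
  assume qp: "q > 0" and g: "g \<in> Ppos q"
  hence q: "q \<noteq> 0" by simp
  have gC: "g \<in> carrier (BS q)" using g by (simp add: Ppos_def)
  obtain m k m' where gnf: "g = nf q m k m'" using carrier_nf[OF gC] by blast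
  have pw: "(of_int q :: real) powi (- int m) > 0" using qp by simp
  show ?thesis
  proof (cases "gr q g > 0")
    case True
    hence "of_int k * of_int q powi (- int m) > (0::real)" using gnf q by simp
    hence kpos: "k > 0" using pw by (simp add: zero_less_mult_iff)
    then obtain k0 where k0: "nat k = Suc k0" by (metis gr0_implies_Suc zero_less_nat_eq)
    define w :: "nat list" where "w = replicate m 1 @ replicate (nat k) 2 @ replicate m' 0"
    have "map dec w = nfw m k m'" using kpos by (simp add: w_def nfw_def bpow_def)
    hence piw: "piX q w = g" by (simp add: piX_def gnf nf_nfw)
    have wX: "w \<in> lists XX" by (simp add: w_def)
    have end1: "nfa_run Dpos 1 (replicate m' 0) r \<and> r \<in> Fpos" if "r = (if m' = 0 then 1 else 2)" for r
    proof (cases m')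
      case 0 thus ?thesis using that by (simp add: Fpos_def nfa_run.nfa_nil)
    next
      case (Suc m0)
      have "nfa_run Dpos 2 (replicate m0 0 @ []) 2" by (rule nfa_loop) (auto simp: Dpos_def intro: nfa_run.intros)
      hence "nfa_run Dpos 1 (0 # replicate m0 0) 2" by (auto simp: Dpos_def intro: nfa_run.intros)
      thus ?thesis using that Suc by (simp add: Fpos_def)
    qed
    obtain r where r: "nfa_run Dpos 1 (replicate m' 0) r" "r \<in> Fpos" using end1 by blast
    have "nfa_run Dpos 1 (replicate k0 2 @ replicate m' 0) r" by (rule nfa_loop[OF _ r(1)]) (simp add: Dpos_def)
    hence "nfa_run Dpos 0 (2 # replicate k0 2 @ replicate m' 0) r" by (auto simp: Dpos_def intro: nfa_run.intros)
    hence "nfa_run Dpos 0 (replicate m 1 @ 2 # replicate k0 2 @ replicate m' 0) r" by (rule nfa_loop[rotated]) (simp add: Dpos_def)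
    hence "nfa_run Dpos 0 w r" by (simp add: w_def k0)
    hence "w \<in> Lpos" using wX r by (auto simp: Lpos_def Ipos_def)
    thus ?thesis using piw by blast
  next
    case False
    hence gr0: "gr q g = 0" and gn0: "gn g > 0" using g by (auto simp: Ppos_def)
    obtain n0 where n0: "nat (gn g) = Suc n0" using gn0 by (metis gr0_implies_Suc zero_less_nat_eq)
    define w :: "nat list" where "w = replicate (nat (gn g)) 0"
    have wX: "w \<in> lists XX" by (simp add: w_def)
    have Ew: "E w = gn g" using gn0 by (simp add: w_def E_def)
    have Vw: "V q w = 0" by (simp add: w_def V_def)
    have piw: "piX q w = g" using faithful[OF q pi_in, of g w] g Ew Vw gr0 q by (simp add: Ppos_def)
    have "nfa_run Dpos 3 (replicate n0 0 @ []) 3" by (rule nfa_loop) (auto simp: Dpos_def intro: nfa_run.intros)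
    hence "nfa_run Dpos 4 (0 # replicate n0 0) 3" by (auto simp: Dpos_def intro: nfa_run.intros)
    hence "w \<in> Lpos" using wX by (auto simp: Lpos_def Ipos_def Fpos_def w_def n0)
    thus ?thesis using piw by blast
  qed
qed

lemma reg_pos: "q > 0 \<Longrightarrow> admits_C_left_order regular_lang (BS q)"
proof -
  assume q: "q > 0"
  have "piX q ` Lpos = Ppos q" using Lpos_sound[OF q] Lpos_complete[OF q] by blast
  moreover have "Lpos \<subseteq> lists XX" by (auto simp: Lpos_def)
  ultimately show ?thesis using build_C[of q "Ppos q" Lpos regular_lang] cone_Ppos[OF q] reg_Lpos by blast
qed


definition Dz :: "(nat \<times> nat \<times> nat) set" where "Dz = {(0,0,1), (1,0,1)}"
definition Lz :: "nat list set" where "Lz = {w \<in> lists XX. \<exists>p\<in>{0}. \<exists>r\<in>{1}. nfa_run Dz p w r}"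

lemma reg_Lz: "regular_lang XX Lz"
  unfolding regular_lang_def Lz_def
  by (rule exI[of _ "{0,1}"], rule exI[of _ "{0}"], rule exI[of _ "{1}"], rule exI[of _ Dz])
     (auto simp: Dz_def XX_def)

definition Sz :: "nat \<Rightarrow> nat list set" where
  "Sz p = (if p = 0 then {w. E w > 0} else {w. E w \<ge> 0})"

lemma Lz_sound: "w \<in> Lz \<Longrightarrow> piX 0 w \<in> P0"
proof -
  assume w: "w \<in> Lz"
  have step: "x # w \<in> Sz p" if "(p, x, p') \<in> Dz" "w \<in> Sz p'" for p x p' w
    using that by (auto simp: Dz_def Sz_def)
  have fin: "[] \<in> Sz r" if "r \<in> {1}" for r using that by (auto simp: Sz_def)
  from w have "nfa_run Dz 0 w 1" by (auto simp: Lz_def)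
  hence "w \<in> Sz 0" using nfa_sound[of Dz Sz "{1}"] step fin by blast
  thus ?thesis by (simp add: Sz_def P0_def)
qed

lemma Lz_complete: "g \<in> P0 \<Longrightarrow> g \<in> piX 0 ` Lz"
proof -
  assume g: "g \<in> P0"
  hence gC: "g \<in> carrier (BS 0)" and gn0: "gn g > 0" by (auto simp: P0_def)
  obtain n0 where n0: "nat (gn g) = Suc n0" using gn0 by (metis gr0_implies_Suc zero_less_nat_eq)
  define w :: "nat list" where "w = replicate (nat (gn g)) 0"
  have wX: "w \<in> lists XX" by (simp add: w_def)
  have Ew: "E w = gn g" using gn0 by (simp add: w_def E_def)
  have piw: "piX 0 w = g" using faithful0[OF pi_in gC] Ew by simp
  have "nfa_run Dz 1 (replicate n0 0 @ []) 1" by (rule nfa_loop) (auto simp: Dz_def intro: nfa_run.intros)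
  hence "nfa_run Dz 0 (0 # replicate n0 0) 1" by (auto simp: Dz_def intro: nfa_run.intros)
  hence "w \<in> Lz" using wX by (auto simp: Lz_def w_def n0)
  thus ?thesis using piw by blast
qed

lemma reg_zero: "admits_C_left_order regular_lang (BS 0)"
proof -
  have "piX 0 ` Lz = P0" using Lz_sound Lz_complete by blast
  moreover have "Lz \<subseteq> lists XX" by (auto simp: Lz_def)
  ultimately show ?thesis using build_C[of 0 P0 Lz regular_lang] cone_P0 reg_Lz by blast
qed

definition Dm :: "(nat \<times> nat \<times> nat) set" where
  "Dm = {(0,2,0), (0,0,2), (1,3,1), (1,0,2), (2,0,2), (5,2,6), (6,2,6)}"
definition Im :: "nat set" where "Im = {0, 1, 5}"
definition Fm :: "nat set" where "Fm = {2, 6}"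
definition Lm :: "nat list set" where "Lm = {w \<in> lists XX. \<exists>p\<in>Im. \<exists>r\<in>Fm. nfa_run Dm p w r}"

lemma reg_Lm: "regular_lang XX Lm"
  unfolding regular_lang_def Lm_def
  by (rule exI[of _ "{0,1,2,5,6}"], rule exI[of _ Im], rule exI[of _ Fm], rule exI[of _ Dm])
     (auto simp: Im_def Fm_def Dm_def XX_def)

definition Sm :: "int \<Rightarrow> nat \<Rightarrow> nat list set" where
  "Sm q p = (if p = 0 \<or> p = 1 then {w. E w > 0} else if p = 2 then {w. E w \<ge> 0}
     else if p = 6 then {w. E w = 0 \<and> V q w \<ge> 0} else {w. E w = 0 \<and> V q w > 0})"

lemma Lm_sound: "q \<noteq> 0 \<Longrightarrow> w \<in> Lm \<Longrightarrow> piX q w \<in> Plex q"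
proof -
  assume q: "q \<noteq> 0" and w: "w \<in> Lm"
  have step: "x # w \<in> Sm q p" if "(p, x, p') \<in> Dm" "w \<in> Sm q p'" for p x p' w
    using that by (auto simp: Dm_def Sm_def)
  have fin: "[] \<in> Sm q r" if "r \<in> Fm" for r using that by (auto simp: Fm_def Sm_def)
  from w obtain p r where "p \<in> Im" "r \<in> Fm" "nfa_run Dm p w r" by (auto simp: Lm_def)
  hence "w \<in> Sm q p" using nfa_sound[of Dm "Sm q" Fm] step fin by blast
  thus ?thesis using \<open>p \<in> Im\<close> q by (auto simp: Im_def Sm_def Plex_def)
qed

definition bw :: "int \<Rightarrow> nat list" where
  "bw j = (if 0 \<le> j then replicate (nat j) 2 else replicate (nat (- j)) 3)"

lemma map_dec_bw: "map dec (bw j) = bpow j" by (simp add: bw_def bpow_def)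

lemma bw_X [simp]: "bw j \<in> lists XX" by (simp add: bw_def)

lemma E_bw [simp]: "E (bw j @ w) = E w" by (simp add: E_def map_dec_bw)
lemma V_bw [simp]: "V q (bw j @ w) = V q w + of_int j" by (simp add: V_def map_dec_bw)

lemma E_rep0 [simp]: "E (replicate n 0) = int n" by (simp add: E_def)
lemma V_rep0 [simp]: "V q (replicate n 0) = 0" by (simp add: V_def)

lemma gr_int_m1: "g \<in> carrier (BS (-1)) \<Longrightarrow> \<exists>j::int. gr (-1) g = of_int j"
proof -
  assume g: "g \<in> carrier (BS (-1))"
  obtain m k where mk: "gr (-1) g = of_int k * of_int (-1) powi (- int m)" using gr_form[OF _ g] by auto
  have "(of_int (-1) :: real) powi (- int m) = of_int ((-1) ^ m)"
    by (cases "even m") (simp_all add: power_int_minus)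
  thus ?thesis using mk by (metis of_int_mult)
qed

lemma Lm_complete: "g \<in> Plex (-1) \<Longrightarrow> g \<in> piX (-1) ` Lm"
proof -
  assume g: "g \<in> Plex (-1)"
  have gC: "g \<in> carrier (BS (-1))" using g by (simp add: Plex_def)
  obtain j where j: "gr (-1) g = of_int j" using gr_int_m1[OF gC] by blast
  show ?thesis
  proof (cases "gn g > 0")
    case True
    obtain n0 where n0: "nat (gn g) = Suc n0" using True by (metis gr0_implies_Suc zero_less_nat_eq)
    define w where "w = bw j @ replicate (nat (gn g)) 0"
    have wX: "w \<in> lists XX" by (simp add: w_def)
    have "E w = gn g" using True by (simp add: w_def)
    moreover have "V (-1) w = gr (-1) g" by (simp add: w_def j)
    ultimately have piw: "piX (-1) w = g" using faithful[OF _ pi_in gC, of w] by simp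
    have t2: "nfa_run Dm 2 (replicate n0 0 @ []) 2" by (rule nfa_loop) (auto simp: Dm_def intro: nfa_run.intros)
    have "nfa_run Dm p w 2" if "p = (if 0 \<le> j then 0 else 1)" for p
    proof (cases "0 \<le> j")
      case True
      have "nfa_run Dm 0 (0 # replicate n0 0) 2" using t2 by (auto simp: Dm_def intro: nfa_run.intros)
      hence "nfa_run Dm 0 (replicate (nat j) 2 @ 0 # replicate n0 0) 2"
        by (rule nfa_loop[rotated]) (simp add: Dm_def)
      thus ?thesis using that True by (simp add: w_def bw_def n0)
    next
      case False
      have "nfa_run Dm 1 (0 # replicate n0 0) 2" using t2 by (auto simp: Dm_def intro: nfa_run.intros)
      hence "nfa_run Dm 1 (replicate (nat (- j)) 3 @ 0 # replicate n0 0) 2"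
        by (rule nfa_loop[rotated]) (simp add: Dm_def)
      thus ?thesis using that False by (simp add: w_def bw_def n0)
    qed
    hence "nfa_run Dm (if 0 \<le> j then 0 else 1) w 2" by blast
    moreover have "(if 0 \<le> j then 0 else 1) \<in> Im" by (simp add: Im_def)
    moreover have "(2::nat) \<in> Fm" by (simp add: Fm_def)
    ultimately have "w \<in> Lm" using wX unfolding Lm_def by blast
    thus ?thesis using piw by blast
  next
    case False
    hence gn0: "gn g = 0" and grp: "gr (-1) g > 0" using g by (auto simp: Plex_def)
    hence jp: "j > 0" using j by simp
    obtain j0 where j0: "nat j = Suc j0" using jp by (metis gr0_implies_Suc zero_less_nat_eq)
    define w where "w = bw j"
    have wX: "w \<in> lists XX" by (simp add: w_def)
    have "E w = gn g" using gn0 E_bw[of j "[]"] by (simp add: w_def)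
    moreover have "V (-1) w = gr (-1) g" using V_bw[of "-1" j "[]"] by (simp add: w_def j)
    ultimately have piw: "piX (-1) w = g" using faithful[OF _ pi_in gC, of w] by simp
    have "nfa_run Dm 6 (replicate j0 2 @ []) 6" by (rule nfa_loop) (auto simp: Dm_def intro: nfa_run.intros)
    hence "nfa_run Dm 5 (2 # replicate j0 2) 6" by (auto simp: Dm_def intro: nfa_run.intros)
    hence "w \<in> Lm" using wX jp by (auto simp: Lm_def Im_def Fm_def w_def bw_def j0)
    thus ?thesis using piw by blast
  qed
qed

lemma reg_m1: "admits_C_left_order regular_lang (BS (-1))"
proof -
  have "piX (-1) ` Lm = Plex (-1)" using Lm_sound[of "-1"] Lm_complete by force
  moreover have "Lm \<subseteq> lists XX" by (auto simp: Lm_def)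
  ultimately show ?thesis using build_C[of "-1" "Plex (-1)" Lm regular_lang] cone_Plex[of "-1"] reg_Lm by simp
qed


section \<open>One-counter construction\<close>

definition D1 :: "oc_trans set" where
  "D1 = {(10, None, True, 0, 0),
         (0, Some 1, True, 0, 1), (0, Some 1, False, 0, 2),
         (0, None, True, 1, 0), (0, None, False, 1, 1),
         (0, None, True, 2, 0), (0, None, False, 2, 1),
         (1, Some 2, True, 1, 0), (1, Some 2, False, 1, 1),
         (2, Some 3, True, 2, 0), (2, Some 3, False, 2, 1),
         (1, None, True, 3, 0), (1, None, False, 3, 1),
         (2, None, True, 3, 0), (2, None, False, 3, 1),
         (3, Some 0, False, 3, 0), (3, Some 0, True, 4, 0), (4, Some 0, True, 4, 0)}"

definition D2 :: "oc_trans set" where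
  "D2 = {(10, None, True, 5, 0),
         (5, Some 1, True, 6, 1), (5, Some 1, False, 6, 2),
         (6, Some 1, True, 5, 1), (6, Some 1, False, 5, 2),
         (5, Some 2, True, 7, 0), (5, Some 2, False, 7, 1),
         (7, Some 2, True, 7, 0), (7, Some 2, False, 7, 1),
         (7, None, True, 8, 0), (7, None, False, 8, 1),
         (8, Some 0, False, 8, 0), (8, None, True, 9, 0)}"

definition Doc :: "int \<Rightarrow> oc_trans set" where
  "Doc q = D1 \<union> (if q = 0 then {} else D2)"

definition Foc :: "nat set" where "Foc = {4, 9}"

definition Loc :: "int \<Rightarrow> nat list set" where
  "Loc q = {w \<in> lists XX. \<exists>r\<in>Foc. \<exists>m. oc_run (Doc q) 10 0 w r m}"

lemma oc_Loc: "one_counter_lang XX (Loc q)"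
  unfolding one_counter_lang_def Loc_def
  by (rule exI[of _ "{0..10}"], rule exI[of _ 10], rule exI[of _ Foc], rule exI[of _ "Doc q"])
     (auto simp: Foc_def Doc_def D1_def D2_def XX_def)

definition Soc :: "int \<Rightarrow> nat \<Rightarrow> nat \<Rightarrow> nat list set" where
  "Soc q p c = (if p = 10 then (if q = 0 then {w. E w > 0} else {w. E w > 0 \<or> (E w = 0 \<and> V q w > 0)})
    else if p \<le> 3 then {w. E w > int c}
    else if p = 4 then {w. E w \<ge> 0}
    else if p = 5 then {w. E w = int c \<and> V q w > 0}
    else if p = 6 then {w. E w = int c \<and> of_int q * V q w > 0}
    else if p = 7 then {w. E w = int c \<and> V q w \<ge> 0}
    else if p = 8 then {w. E w = int c \<and> V q w = 0}
    else {w. E w = 0 \<and> V q w = 0})"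

lemma div_pos_iff: "(q::real) \<noteq> 0 \<Longrightarrow> a / q > 0 \<longleftrightarrow> q * a > 0"
  by (cases "q > 0") (auto simp: zero_less_divide_iff zero_less_mult_iff)

lemma oc_sound_read_zero: "(p, Some x, True, p', k) \<in> Doc q \<Longrightarrow> w \<in> Soc q p' k \<Longrightarrow> x # w \<in> Soc q p 0"
  by (auto simp: Doc_def D1_def D2_def Soc_def div_pos_iff split: if_splits)

lemma oc_sound_read_pos: "(p, Some x, False, p', k) \<in> Doc q \<Longrightarrow> w \<in> Soc q p' (n + k) \<Longrightarrow> x # w \<in> Soc q p (Suc n)"
  by (auto simp: Doc_def D1_def D2_def Soc_def div_pos_iff split: if_splits)

lemma oc_sound_eps_zero: "(p, None, True, p', k) \<in> Doc q \<Longrightarrow> w \<in> Soc q p' k \<Longrightarrow> w \<in> Soc q p 0"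
  by (auto simp: Doc_def D1_def D2_def Soc_def split: if_splits)

lemma oc_sound_eps_pos: "(p, None, False, p', k) \<in> Doc q \<Longrightarrow> w \<in> Soc q p' (n + k) \<Longrightarrow> w \<in> Soc q p (Suc n)"
  by (auto simp: Doc_def D1_def D2_def Soc_def split: if_splits)

lemma oc_sound: "oc_run (Doc q) p c w r m \<Longrightarrow> r \<in> Foc \<Longrightarrow> w \<in> Soc q p c"
proof (induction rule: oc_run.induct)
  case (oc_nil p n) thus ?case by (auto simp: Foc_def Soc_def)
next
  case (oc_read_zero p x p' k w r m) thus ?case using oc_sound_read_zero by blast
next
  case (oc_read_pos p x p' n k w r m) thus ?case using oc_sound_read_pos by blast
next
  case (oc_eps_zero p p' k w r m) thus ?case using oc_sound_eps_zero by blast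
next
  case (oc_eps_pos p p' n k w r m) thus ?case using oc_sound_eps_pos by blast
qed

definition Poc :: "int \<Rightarrow> gen list set set" where
  "Poc q = (if q = 0 then P0 else Plex q)"

lemma Loc_sound: "w \<in> Loc q \<Longrightarrow> piX q w \<in> Poc q"
proof -
  assume "w \<in> Loc q"
  then obtain r m where "r \<in> Foc" "oc_run (Doc q) 10 0 w r m" by (auto simp: Loc_def)
  hence "w \<in> Soc q 10 0" using oc_sound by blast
  thus ?thesis by (cases "q = 0") (auto simp: Soc_def Poc_def P0_def Plex_def)
qed


lemma oc_push: "(p, Some x, True, p', 1) \<in> D \<Longrightarrow> (p, Some x, False, p', 2) \<in> D \<Longrightarrow>
  oc_run D p' (Suc c) w r m \<Longrightarrow> oc_run D p c (x # w) r m"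
  by (cases c) (auto intro: oc_run.intros)

lemma oc_keep: "(p, Some x, True, p', 0) \<in> D \<Longrightarrow> (p, Some x, False, p', 1) \<in> D \<Longrightarrow>
  oc_run D p' c w r m \<Longrightarrow> oc_run D p c (x # w) r m"
  by (cases c) (auto intro: oc_run.intros)

lemma oc_keep_eps: "(p, None, True, p', 0) \<in> D \<Longrightarrow> (p, None, False, p', 1) \<in> D \<Longrightarrow>
  oc_run D p' c w r m \<Longrightarrow> oc_run D p c w r m"
  by (cases c) (auto intro: oc_run.intros)

lemma oc_pop: "(p, Some x, False, p', 0) \<in> D \<Longrightarrow> oc_run D p' c w r m \<Longrightarrow> oc_run D p (Suc c) (x # w) r m"
  using oc_run.oc_read_pos[of p x p' 0 D c w r m] by simp

lemma oc_zero_read: "(p, Some x, True, p', 0) \<in> D \<Longrightarrow> oc_run D p' 0 w r m \<Longrightarrow> oc_run D p 0 (x # w) r m"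
  by (auto intro: oc_run.intros)

lemma oc_zero_eps: "(p, None, True, p', 0) \<in> D \<Longrightarrow> oc_run D p' 0 w r m \<Longrightarrow> oc_run D p 0 w r m"
  by (auto intro: oc_run.intros)

lemma oc_push_loop: "(p, Some x, True, p, 1) \<in> D \<Longrightarrow> (p, Some x, False, p, 2) \<in> D \<Longrightarrow>
  oc_run D p (c + n) w r m \<Longrightarrow> oc_run D p c (replicate n x @ w) r m"
proof (induction n arbitrary: c)
  case 0 thus ?case by simp
next
  case (Suc n)
  have "oc_run D p (Suc c + n) w r m" using Suc.prems by simp
  hence "oc_run D p (Suc c) (replicate n x @ w) r m" using Suc.IH Suc.prems by blast
  thus ?case using oc_push[OF Suc.prems(1,2)] by simp
qed

lemma oc_keep_loop: "(p, Some x, True, p, 0) \<in> D \<Longrightarrow> (p, Some x, False, p, 1) \<in> D \<Longrightarrow>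
  oc_run D p c w r m \<Longrightarrow> oc_run D p c (replicate n x @ w) r m"
  by (induction n) (auto intro: oc_keep)

lemma oc_zero_loop: "(p, Some x, True, p, 0) \<in> D \<Longrightarrow>
  oc_run D p 0 w r m \<Longrightarrow> oc_run D p 0 (replicate n x @ w) r m"
  by (induction n) (auto intro: oc_zero_read)

lemma oc_pop_loop: "(p, Some x, False, p, 0) \<in> D \<Longrightarrow>
  oc_run D p c w r m \<Longrightarrow> oc_run D p (c + n) (replicate n x @ w) r m"
  by (induction n) (auto intro: oc_pop)

lemma oc_pair_loop: "(5, Some x, True, 6, 1) \<in> D \<Longrightarrow> (5, Some x, False, 6, 2) \<in> D \<Longrightarrow>
  (6, Some x, True, 5, 1) \<in> D \<Longrightarrow> (6, Some x, False, 5, 2) \<in> D \<Longrightarrow>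
  oc_run D 5 (c + 2 * n) w r m \<Longrightarrow> oc_run D 5 c (replicate (2 * n) x @ w) r m"
proof (induction n arbitrary: c)
  case 0 thus ?case by simp
next
  case (Suc n)
  have "oc_run D 5 (Suc (Suc c) + 2 * n) w r m" using Suc.prems by simp
  hence "oc_run D 5 (Suc (Suc c)) (replicate (2 * n) x @ w) r m" using Suc.IH Suc.prems(1-4) by blast
  hence "oc_run D 6 (Suc c) (x # replicate (2 * n) x @ w) r m" using oc_push[OF Suc.prems(3,4)] by blast
  hence "oc_run D 5 c (x # x # replicate (2 * n) x @ w) r m" using oc_push[OF Suc.prems(1,2)] by blast
  thus ?case by simp
qed

lemma D1_sub: "D1 \<subseteq> Doc q" by (simp add: Doc_def)
lemma D2_sub: "q \<noteq> 0 \<Longrightarrow> D2 \<subseteq> Doc q" by (simp add: Doc_def)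

lemma branch1:
  assumes mm: "m < m'"
  shows "oc_run (Doc q) 10 0 (replicate m 1 @ bw k @ replicate m' 0) 4 0"
proof -
  let ?D = "Doc q"
  have M: "(10, None, True, 0, 0) \<in> ?D"
    "(0, Some 1, True, 0, 1) \<in> ?D" "(0, Some 1, False, 0, 2) \<in> ?D"
    "(0, None, True, 1, 0) \<in> ?D" "(0, None, False, 1, 1) \<in> ?D"
    "(0, None, True, 2, 0) \<in> ?D" "(0, None, False, 2, 1) \<in> ?D"
    "(1, Some 2, True, 1, 0) \<in> ?D" "(1, Some 2, False, 1, 1) \<in> ?D"
    "(2, Some 3, True, 2, 0) \<in> ?D" "(2, Some 3, False, 2, 1) \<in> ?D"
    "(1, None, True, 3, 0) \<in> ?D" "(1, None, False, 3, 1) \<in> ?D"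
    "(2, None, True, 3, 0) \<in> ?D" "(2, None, False, 3, 1) \<in> ?D"
    "(3, Some 0, False, 3, 0) \<in> ?D" "(3, Some 0, True, 4, 0) \<in> ?D" "(4, Some 0, True, 4, 0) \<in> ?D"
    by (simp_all add: Doc_def D1_def)
  obtain d where d0: "m' = Suc (m + d)" using less_imp_Suc_add[OF mm] by blast
  hence d: "m' = m + Suc d" by simp
  have r4: "oc_run ?D 4 0 (replicate d 0 @ []) 4 0"
    by (rule oc_zero_loop[OF M(18)]) (rule oc_run.oc_nil)
  have r3: "oc_run ?D 3 0 (0 # replicate d 0) 4 0"
    using r4 by (intro oc_zero_read[OF M(17)]) simp
  have r3b: "oc_run ?D 3 (0 + m) (replicate m 0 @ 0 # replicate d 0) 4 0"
    using r3 by (rule oc_pop_loop[OF M(16)])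
  have rb: "oc_run ?D 0 m (bw k @ replicate m 0 @ 0 # replicate d 0) 4 0"
  proof (cases "0 \<le> k")
    case True
    have "oc_run ?D 1 m (replicate m 0 @ 0 # replicate d 0) 4 0"
      using r3b by (intro oc_keep_eps[OF M(12) M(13)]) simp
    hence "oc_run ?D 1 m (replicate (nat k) 2 @ replicate m 0 @ 0 # replicate d 0) 4 0"
      by (rule oc_keep_loop[OF M(8) M(9)])
    hence "oc_run ?D 0 m (replicate (nat k) 2 @ replicate m 0 @ 0 # replicate d 0) 4 0"
      by (rule oc_keep_eps[OF M(4) M(5)])
    thus ?thesis using True by (simp add: bw_def)
  next
    case False
    have "oc_run ?D 2 m (replicate m 0 @ 0 # replicate d 0) 4 0"
      using r3b by (intro oc_keep_eps[OF M(14) M(15)]) simp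
    hence "oc_run ?D 2 m (replicate (nat (- k)) 3 @ replicate m 0 @ 0 # replicate d 0) 4 0"
      by (rule oc_keep_loop[OF M(10) M(11)])
    hence "oc_run ?D 0 m (replicate (nat (- k)) 3 @ replicate m 0 @ 0 # replicate d 0) 4 0"
      by (rule oc_keep_eps[OF M(6) M(7)])
    thus ?thesis using False by (simp add: bw_def)
  qed
  have "oc_run ?D 0 0 (replicate m 1 @ bw k @ replicate m 0 @ 0 # replicate d 0) 4 0"
    using rb by (intro oc_push_loop[OF M(2) M(3)]) simp
  hence "oc_run ?D 10 0 (replicate m 1 @ bw k @ replicate m 0 @ 0 # replicate d 0) 4 0"
    by (rule oc_zero_eps[OF M(1)])
  moreover have "replicate m' (0::nat) = replicate m 0 @ 0 # replicate d 0"
    unfolding d replicate_add by simp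
  ultimately show ?thesis by simp
qed

lemma branch2:
  assumes q: "q \<noteq> 0" and k: "k > 0"
  shows "oc_run (Doc q) 10 0 (replicate (2 * j) 1 @ replicate k 2 @ replicate (2 * j) 0) 9 0"
proof -
  let ?D = "Doc q"
  have M: "(10, None, True, 5, 0) \<in> ?D"
    "(5, Some 1, True, 6, 1) \<in> ?D" "(5, Some 1, False, 6, 2) \<in> ?D"
    "(6, Some 1, True, 5, 1) \<in> ?D" "(6, Some 1, False, 5, 2) \<in> ?D"
    "(5, Some 2, True, 7, 0) \<in> ?D" "(5, Some 2, False, 7, 1) \<in> ?D"
    "(7, Some 2, True, 7, 0) \<in> ?D" "(7, Some 2, False, 7, 1) \<in> ?D"
    "(7, None, True, 8, 0) \<in> ?D" "(7, None, False, 8, 1) \<in> ?D"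
    "(8, Some 0, False, 8, 0) \<in> ?D" "(8, None, True, 9, 0) \<in> ?D"
    using q by (simp_all add: Doc_def D2_def)
  obtain k0 where k0: "k = Suc k0" using gr0_implies_Suc[OF k] by blast
  have r9: "oc_run ?D 9 0 [] 9 0" by (rule oc_run.oc_nil)
  have r8: "oc_run ?D 8 0 [] 9 0" using r9 by (rule oc_zero_eps[OF M(13)])
  have r8b: "oc_run ?D 8 (0 + 2 * j) (replicate (2 * j) 0 @ []) 9 0"
    using r8 by (rule oc_pop_loop[OF M(12)])
  have r7: "oc_run ?D 7 (2 * j) (replicate (2 * j) 0) 9 0"
    using r8b by (intro oc_keep_eps[OF M(10) M(11)]) simp
  have r7b: "oc_run ?D 7 (2 * j) (replicate k0 2 @ replicate (2 * j) 0) 9 0"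
    using r7 by (rule oc_keep_loop[OF M(8) M(9)])
  have r5: "oc_run ?D 5 (2 * j) (2 # replicate k0 2 @ replicate (2 * j) 0) 9 0"
    using r7b by (rule oc_keep[OF M(6) M(7)])
  have r5b: "oc_run ?D 5 0 (replicate (2 * j) 1 @ 2 # replicate k0 2 @ replicate (2 * j) 0) 9 0"
    using r5 by (intro oc_pair_loop[OF M(2) M(3) M(4) M(5)]) simp
  have "oc_run ?D 10 0 (replicate (2 * j) 1 @ 2 # replicate k0 2 @ replicate (2 * j) 0) 9 0"
    using r5b by (rule oc_zero_eps[OF M(1)])
  thus ?thesis by (simp add: k0)
qed


lemma powi_even_pos: "q \<noteq> 0 \<Longrightarrow> (of_int q :: real) powi (- int (2 * m)) > 0"
proof -
  assume q: "q \<noteq> 0"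
  have "(of_int q :: real) ^ (2 * m) = (of_int q ^ 2) ^ m" by (simp add: power_mult)
  moreover have "(of_int q :: real) ^ 2 > 0" using q by simp
  ultimately have "(of_int q :: real) ^ (2 * m) > 0" by simp
  moreover have "(of_int q :: real) powi (- int (2 * m)) = inverse (of_int q ^ (2 * m))"
    by (simp only: power_int_minus power_int_of_nat)
  ultimately show ?thesis by simp
qed

lemma Loc_complete: "g \<in> Poc q \<Longrightarrow> g \<in> piX q ` Loc q"
proof -
  assume g: "g \<in> Poc q"
  have gC: "g \<in> carrier (BS q)" using g by (auto simp: Poc_def P0_def Plex_def split: if_splits)
  obtain m k m' where gnf: "g = nf q m k m'" using carrier_nf[OF gC] by blast
  show ?thesis
  proof (cases "gn g > 0")
    case True
    hence mm: "m < m'" using gnf by simp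
    define w where "w = replicate m 1 @ bw k @ replicate m' 0"
    have "map dec w = nfw m k m'" by (simp add: w_def nfw_def map_dec_bw)
    hence piw: "piX q w = g" by (simp add: piX_def gnf nf_nfw)
    have wX: "w \<in> lists XX" by (simp add: w_def)
    have "oc_run (Doc q) 10 0 w 4 0" unfolding w_def by (rule branch1[OF mm])
    hence "w \<in> Loc q" using wX by (auto simp: Loc_def Foc_def)
    thus ?thesis using piw by blast
  next
    case False
    hence q: "q \<noteq> 0" and gn0: "gn g = 0" and grp: "gr q g > 0"
      using g by (auto simp: Poc_def P0_def Plex_def split: if_splits)
    have mm: "m' = m" using gn0 gnf by simp
    have grk: "gr q g = of_int k * of_int q powi (- int m)" using gnf q by simp
    define k2 where "k2 = k * q ^ m"
    have qr: "(of_int q :: real) \<noteq> 0" using q by simp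
    have pe: "(of_int q :: real) ^ m * of_int q powi (- int (2 * m)) = of_int q powi (- int m)"
    proof -
      have "(of_int q :: real) ^ m * of_int q powi (- int (2 * m)) = of_int q powi (int m) * of_int q powi (- int (2 * m))"
        by (simp only: power_int_of_nat)
      also have "\<dots> = of_int q powi (int m + (- int (2 * m)))"
        by (rule power_int_add[symmetric]) (use qr in simp)
      also have "int m + (- int (2 * m)) = - int m" by simp
      finally show ?thesis .
    qed
    have grk2: "gr q g = of_int k2 * of_int q powi (- int (2 * m))"
      using grk pe by (simp add: k2_def mult.assoc)
    have k2p: "k2 > 0" using grk2 grp powi_even_pos[OF q, of m] by (simp add: zero_less_mult_iff)
    define w :: "nat list" where "w = replicate (2 * m) 1 @ replicate (nat k2) 2 @ replicate (2 * m) 0"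
    have "map dec w = nfw (2 * m) k2 (2 * m)" using k2p by (simp add: w_def nfw_def bpow_def)
    hence "E w = 0" "V q w = gr q g" using q grk2 by (simp_all add: E_def V_def word_act_nfw)
    hence piw: "piX q w = g" using faithful[OF q pi_in gC, of w] gn0 q by simp
    have wX: "w \<in> lists XX" by (simp add: w_def)
    have "oc_run (Doc q) 10 0 w 9 0" unfolding w_def by (rule branch2[OF q]) (use k2p in simp)
    hence "w \<in> Loc q" using wX by (auto simp: Loc_def Foc_def)
    thus ?thesis using piw by blast
  qed
qed

lemma oc_all: "admits_C_left_order one_counter_lang (BS q)"
proof -
  have "piX q ` Loc q = Poc q" using Loc_sound Loc_complete by blast
  moreover have "Loc q \<subseteq> lists XX" by (auto simp: Loc_def)
  moreover have "cone_ok q (Poc q)" using cone_P0 cone_Plex by (simp add: Poc_def)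
  ultimately show ?thesis using build_C[of q "Poc q" "Loc q" one_counter_lang] oc_Loc by blast
qed

theorem theorem3p14:
  shows "(\<forall>q::int. admits_C_left_order one_counter_lang (BS q)) \<and>
         (\<forall>q::int. admits_C_left_order regular_lang (BS q) \<longleftrightarrow> q \<ge> -1) \<and>
         (\<forall>q::int. q \<ge> 2 \<longrightarrow>
            (\<forall>R. C_left_order regular_lang (BS q) R \<longrightarrow> induced_by_affine_action q R))"
proof (intro conjI allI impI)
  fix q :: int show "admits_C_left_order one_counter_lang (BS q)" by (rule oc_all)
next
  fix q :: int
  show "admits_C_left_order regular_lang (BS q) \<longleftrightarrow> q \<ge> -1"
  proof
    assume "admits_C_left_order regular_lang (BS q)"
    thus "q \<ge> -1" using no_regular_neg[of q] by linarith
  next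
    assume q: "q \<ge> -1"
    consider "q = -1" | "q = 0" | "q > 0" using q by linarith
    thus "admits_C_left_order regular_lang (BS q)"
      by cases (simp_all add: reg_m1 reg_zero reg_pos)
  qed
next
  fix q :: int and R assume "q \<ge> 2" "C_left_order regular_lang (BS q) R"
  thus "induced_by_affine_action q R" by (rule regular_induced)
qed


end
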